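(* Let $(N,F)$ be an $F$-isocrystal of dimension $n$ and $0\le r\le n$. Let $M,M'$ be $O_L$-lattices in $N$ with $M\supsetneq M'\supsetneq\pi M$, $\mathrm{inv}(M,FM)=\omega_r$ and $\mathrm{inv}(M',FM')=\omega_r$. Then there exists an $O_L$-lattice $\tilde M$ with $M\supset\tilde M\supset M'$, $\dim_{\mathbf F}\tilde M/M'=1$ and $\mathrm{inv}(\tilde M,F\tilde M)=\omega_r$.
   Context: $F$ finite over $\mathbf Q_p$ with uniformizer $\pi$, $L$ the completion of the maximal unramified extension, $O_L$ its integers, $\mathbf F$ its residue field, $\sigma$ the Frobenius of $L/F$. An $F$-isocrystal is a finite-dimensional $L$-space $N$ with a $\sigma$-linear bijection $F$. $\omega_r=(1^r,0^{n-r})$. For lattices $M,M'$, $\mathrm{inv}(M,M')=(\mu_1\ge\dots\ge\mu_n)$ iff $M$ has a basis $e_i$ with $\pi^{\mu_i}e_i$ a basis of $M'$; thus $\mathrm{inv}(M,FM)=\omega_r$ means $\pi M\subset FM\subset M$ with $\dim_{\mathbf F}M/FM=r$. *)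

theory Defs
  imports "HOL-Analysis.Analysis"
begin

text \<open>The predicate frob_data below lists properties which characterise the triple
(L, unif, frob) = (completion of the maximal unramified extension of F, a uniformizer
of F, Frobenius of L/F), F being the fixed field of frob (finite over Q_p).\<close>

definition ideal_pow :: "'L::field set \<Rightarrow> 'L \<Rightarrow> nat \<Rightarrow> 'L set" where
  "ideal_pow OL unif k = {unif ^ k * y | y. y \<in> OL}"

definition frob_data :: "nat \<Rightarrow> nat \<Rightarrow> 'L::field_char_0 set \<Rightarrow> 'L \<Rightarrow> ('L \<Rightarrow> 'L) \<Rightarrow> bool" where
  "frob_data p q OL unif frob \<longleftrightarrow>
     prime p \<and> (\<exists>f\<ge>1. q = p ^ f) \<and>
     \<comment> \<open>OL is a subring of L\<close>
     0 \<in> OL \<and> 1 \<in> OL \<and>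
     (\<forall>x\<in>OL. \<forall>y\<in>OL. x + y \<in> OL \<and> x - y \<in> OL \<and> x * y \<in> OL) \<and>
     \<comment> \<open>OL is a valuation ring of L\<close>
     (\<forall>x. x \<notin> OL \<longrightarrow> inverse x \<in> OL) \<and>
     \<comment> \<open>unif is a uniformizer: a nonzero non-unit generating the maximal ideal\<close>
     unif \<in> OL \<and> unif \<noteq> 0 \<and> inverse unif \<notin> OL \<and>
     (\<forall>x\<in>OL. inverse x \<notin> OL \<longrightarrow> x \<in> ideal_pow OL unif 1) \<and>
     \<comment> \<open>the valuation is discrete (separatedness)\<close>
     (\<forall>x. (\<forall>k. x \<in> ideal_pow OL unif k) \<longrightarrow> x = 0) \<and>
     \<comment> \<open>L is complete for the unif-adic topology\<close>
     (\<forall>s::nat \<Rightarrow> 'L. (\<forall>k. \<exists>N. \<forall>m\<ge>N. \<forall>n\<ge>N. s m - s n \<in> ideal_pow OL unif k) \<longrightarrow>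
        (\<exists>l. \<forall>k. \<exists>N. \<forall>n\<ge>N. s n - l \<in> ideal_pow OL unif k)) \<and>
     \<comment> \<open>the residue field has characteristic p\<close>
     of_nat p \<in> ideal_pow OL unif 1 \<and>
     \<comment> \<open>the residue field is algebraic over F_p\<close>
     (\<forall>x\<in>OL. \<exists>k\<ge>1. x ^ (p ^ k) - x \<in> ideal_pow OL unif 1) \<and>
     \<comment> \<open>the residue field is algebraically closed\<close>
     (\<forall>d\<ge>1. \<forall>a::nat \<Rightarrow> 'L. (\<forall>i<d. a i \<in> OL) \<longrightarrow>
        (\<exists>x\<in>OL. x ^ d + (\<Sum>i<d. a i * x ^ i) \<in> ideal_pow OL unif 1)) \<and>
     \<comment> \<open>frob is a field automorphism preserving OL, fixing unif, lifting x \<mapsto> x^q\<close>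
     bij frob \<and> (\<forall>x y. frob (x + y) = frob x + frob y) \<and>
     (\<forall>x y. frob (x * y) = frob x * frob y) \<and> frob 1 = 1 \<and>
     frob ` OL = OL \<and> frob unif = unif \<and>
     (\<forall>x\<in>OL. frob x - x ^ q \<in> ideal_pow OL unif 1)"

text \<open>The n-dimensional L-space N is realised as 'L^'n (n = CARD('n)).\<close>

definition lin_indep_fam :: "('n::finite \<Rightarrow> 'L::field ^ 'n) \<Rightarrow> bool" where
  "lin_indep_fam B \<longleftrightarrow> (\<forall>c. (\<Sum>i\<in>UNIV. c i *s B i) = 0 \<longrightarrow> (\<forall>i. c i = 0))"

definition O_span :: "'L::field set \<Rightarrow> ('n::finite \<Rightarrow> 'L ^ 'n) \<Rightarrow> ('L ^ 'n) set" where
  "O_span OL B = {\<Sum>i\<in>UNIV. c i *s B i | c. \<forall>i. c i \<in> OL}"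

definition is_lattice :: "'L::field set \<Rightarrow> ('L ^ 'n::finite) set \<Rightarrow> bool" where
  "is_lattice OL M \<longleftrightarrow> (\<exists>B. lin_indep_fam B \<and> M = O_span OL B)"

text \<open>inv(M,M') = mu (mu viewed as an unordered family of integers).\<close>
definition has_inv :: "'L::field set \<Rightarrow> 'L \<Rightarrow> ('L ^ 'n::finite) set \<Rightarrow> ('L ^ 'n) set \<Rightarrow> ('n \<Rightarrow> int) \<Rightarrow> bool" where
  "has_inv OL unif M M' mu \<longleftrightarrow>
     (\<exists>B. lin_indep_fam B \<and> M = O_span OL B \<and> M' = O_span OL (\<lambda>i. (unif powi mu i) *s B i))"

definition inv_omega :: "'L::field set \<Rightarrow> 'L \<Rightarrow> ('L ^ 'n::finite) set \<Rightarrow> ('L ^ 'n) set \<Rightarrow> nat \<Rightarrow> bool" where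
  "inv_omega OL unif M M' r \<longleftrightarrow>
     (\<exists>S. card S = r \<and> has_inv OL unif M M' (\<lambda>i. if i \<in> S then 1 else 0))"

text \<open>dim of Mt/M' equal to 1 (used when unif Mt \<subseteq> M', so the quotient is a vector
space over the residue field): Mt/M' is nonzero and generated by one element.\<close>
definition quot_dim_one :: "'L::field set \<Rightarrow> ('L ^ 'n::finite) set \<Rightarrow> ('L ^ 'n) set \<Rightarrow> bool" where
  "quot_dim_one OL Mt M' \<longleftrightarrow>
     (\<exists>x\<in>Mt. x \<notin> M' \<and> Mt = {y + c *s x | y c. y \<in> M' \<and> c \<in> OL})"

end

theory Submission
  imports Defs
begin


locale vr =
  fixes p q :: nat and OL :: "'L::field_char_0 set" and unif :: 'L and frob :: "'L \<Rightarrow> 'L"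
  assumes hyp: "frob_data p q OL unif frob"
begin

definition "PO = ideal_pow OL unif 1"
definition "unit x \<longleftrightarrow> x \<in> OL \<and> x \<noteq> 0 \<and> inverse x \<in> OL"

lemma O0[simp]: "0 \<in> OL" and O1[simp]: "1 \<in> OL" and Oadd[intro]: "x \<in> OL \<Longrightarrow> y \<in> OL \<Longrightarrow> x + y \<in> OL"
  and Odiff[intro]: "x \<in> OL \<Longrightarrow> y \<in> OL \<Longrightarrow> x - y \<in> OL"
  and Omult[intro]: "x \<in> OL \<Longrightarrow> y \<in> OL \<Longrightarrow> x * y \<in> OL"
  and Oinv: "x \<notin> OL \<Longrightarrow> inverse x \<in> OL"
  and piO[simp]: "unif \<in> OL" and pinz[simp]: "unif \<noteq> 0" and pinv: "inverse unif \<notin> OL"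
  and nonunit_PO: "x \<in> OL \<Longrightarrow> inverse x \<notin> OL \<Longrightarrow> x \<in> PO"
  and discr: "(\<forall>k. x \<in> ideal_pow OL unif k) \<Longrightarrow> x = 0"
  and algcl: "d \<ge> 1 \<Longrightarrow> (\<forall>i<d. a i \<in> OL) \<Longrightarrow> \<exists>x\<in>OL. x ^ d + (\<Sum>i<d. a i * x ^ i) \<in> PO"
  and fbij: "bij frob" and fadd: "frob (x + y) = frob x + frob y"
  and fmult: "frob (x * y) = frob x * frob y" and fone: "frob 1 = 1"
  and fO: "frob ` OL = OL" and fpi: "frob unif = unif"
  and fres: "x \<in> OL \<Longrightarrow> frob x - x ^ q \<in> PO"
  and pprime: "prime p" and qpow: "\<exists>f\<ge>1. q = p ^ f"
  using hyp unfolding frob_data_def PO_def by auto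

lemma Ominus[intro]: "x \<in> OL \<Longrightarrow> - x \<in> OL"
  using Odiff[of 0 x] by simp

lemma Opow[intro]: "x \<in> OL \<Longrightarrow> x ^ k \<in> OL"
  by (induction k) auto

lemma Osum[intro]: "(\<And>i. i \<in> A \<Longrightarrow> f i \<in> OL) \<Longrightarrow> sum f A \<in> OL"
  by (induction A rule: infinite_finite_induct) auto

lemma Oprod[intro]: "(\<And>i. i \<in> A \<Longrightarrow> f i \<in> OL) \<Longrightarrow> prod f A \<in> OL"
  by (induction A rule: infinite_finite_induct) auto

lemma q_ge2: "q \<ge> 2"
proof -
  obtain f where "f \<ge> 1" "q = p ^ f" using qpow by auto
  moreover have "p \<ge> 2" using pprime by (simp add: prime_ge_2_nat)
  ultimately show ?thesis
  proof -
    have "p ^ 1 \<le> p ^ f" using \<open>f \<ge> 1\<close> \<open>p \<ge> 2\<close> by (intro power_increasing) auto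
    then show ?thesis using \<open>q = p ^ f\<close> \<open>p \<ge> 2\<close> by simp
  qed
qed

lemma PO_iff: "x \<in> PO \<longleftrightarrow> x / unif \<in> OL"
proof
  assume "x \<in> PO"
  then obtain y where "y \<in> OL" "x = unif ^ 1 * y" unfolding PO_def ideal_pow_def by auto
  then show "x / unif \<in> OL" by simp
next
  assume "x / unif \<in> OL"
  moreover have "x = unif ^ 1 * (x / unif)" by simp
  ultimately show "x \<in> PO" unfolding PO_def ideal_pow_def by blast
qed

lemma PO_mem: "y \<in> OL \<Longrightarrow> unif * y \<in> PO"
  by (simp add: PO_iff)

lemma PO_sub: "x \<in> PO \<Longrightarrow> x \<in> OL"
proof -
  assume "x \<in> PO"
  then have "unif * (x / unif) \<in> OL" unfolding PO_iff using Omult piO by blast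
  then show ?thesis by simp
qed

lemma PO_add[intro]: "x \<in> PO \<Longrightarrow> y \<in> PO \<Longrightarrow> x + y \<in> PO"
  unfolding PO_iff add_divide_distrib by (rule Oadd)

lemma PO_diff[intro]: "x \<in> PO \<Longrightarrow> y \<in> PO \<Longrightarrow> x - y \<in> PO"
  unfolding PO_iff diff_divide_distrib by (rule Odiff)

lemma PO_multl[intro]: "x \<in> OL \<Longrightarrow> y \<in> PO \<Longrightarrow> x * y \<in> PO"
  unfolding PO_iff times_divide_eq_right[symmetric] by (rule Omult)

lemma PO_multr[intro]: "x \<in> PO \<Longrightarrow> y \<in> OL \<Longrightarrow> x * y \<in> PO"
  using PO_multl[of y x] by (simp add: mult.commute)

lemma PO0[simp]: "0 \<in> PO" by (simp add: PO_iff)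

lemma PO_minus[intro]: "x \<in> PO \<Longrightarrow> - x \<in> PO"
  using PO_diff[of 0 x] by simp

lemma PO_sum[intro]: "(\<And>i. i \<in> A \<Longrightarrow> f i \<in> PO) \<Longrightarrow> sum f A \<in> PO"
  by (induction A rule: infinite_finite_induct) auto

lemma unitI: "x \<in> OL \<Longrightarrow> x \<noteq> 0 \<Longrightarrow> inverse x \<in> OL \<Longrightarrow> unit x" by (simp add: unit_def)

lemma unit_O: "unit x \<Longrightarrow> x \<in> OL" by (simp add: unit_def)


lemma one_not_PO: "1 \<notin> PO"
  using pinv by (simp add: PO_iff divide_inverse)


lemma unit_nz: "unit x \<Longrightarrow> x \<noteq> 0"
  unfolding unit_def by simp

lemma unit_not_PO: "unit x \<Longrightarrow> x \<notin> PO"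
proof
  assume u: "unit x" and "x \<in> PO"
  then have "x / unif \<in> OL" by (simp add: PO_iff)
  then have "inverse x * (x / unif) \<in> OL" using u unfolding unit_def by (intro Omult) auto
  also have "inverse x * (x / unif) = inverse unif" using unit_nz[OF u] by (simp add: divide_inverse)
  finally show False using pinv by simp
qed

lemma O_nonunit: "x \<in> OL \<Longrightarrow> \<not> unit x \<Longrightarrow> x \<in> PO"
  using nonunit_PO unit_def PO0 by auto

lemma unit_mult[intro]: "unit x \<Longrightarrow> unit y \<Longrightarrow> unit (x * y)"
  unfolding unit_def by (auto simp: inverse_mult_distrib)

lemma unit_inverse[intro]: "unit x \<Longrightarrow> unit (inverse x)"
  unfolding unit_def by auto

lemma unit_one[simp]: "unit 1" and unit_m1[simp]: "unit (-1)"
  unfolding unit_def by auto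

lemma unit_minus[intro]: "unit x \<Longrightarrow> unit (- x)"
  unfolding unit_def by (auto intro: Ominus)

lemma unit_div[intro]: "unit x \<Longrightarrow> unit y \<Longrightarrow> unit (x / y)"
  by (simp add: divide_inverse unit_inverse unit_mult)

lemma unit_pow[intro]: "unit x \<Longrightarrow> unit (x ^ k)"
  by (induction k) auto

lemma unit_add_PO: "unit t \<Longrightarrow> z \<in> PO \<Longrightarrow> unit (t + z)"
proof (rule ccontr)
  assume u: "unit t" and z: "z \<in> PO" and n: "\<not> unit (t + z)"
  have "t + z \<in> OL" using u z PO_sub unit_O by auto
  then have "t + z \<in> PO" using n O_nonunit by auto
  then have "(t + z) - z \<in> PO" using z by (rule PO_diff)
  then show False using u unit_not_PO by auto
qed

lemma unit_iff_notPO: "x \<in> OL \<Longrightarrow> unit x \<longleftrightarrow> x \<notin> PO"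
  using unit_not_PO O_nonunit by auto

lemma ratio: "x / y \<in> OL \<or> y / x \<in> OL"
  using Oinv[of "x / y"] by auto

lemma exists_max:
  assumes "finite I" "i0 \<in> I" "c i0 \<noteq> 0"
  shows "\<exists>j\<in>I. c j \<noteq> 0 \<and> (\<forall>i\<in>I. c i / c j \<in> OL)"
  using assms
proof (induction I arbitrary: i0 rule: finite_induct)
  case empty then show ?case by simp
next
  case (insert a I)
  show ?case
  proof (cases "\<exists>i\<in>I. c i \<noteq> 0")
    case False
    then have "c a \<noteq> 0" using insert by auto
    then show ?thesis using False by (auto intro!: bexI[of _ a])
  next
    case True
    then obtain i1 where "i1 \<in> I" "c i1 \<noteq> 0" by auto
    from insert.IH[OF this] obtain j where j: "j \<in> I" "c j \<noteq> 0" "\<forall>i\<in>I. c i / c j \<in> OL" by auto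
    show ?thesis
    proof (cases "c a / c j \<in> OL")
      case True then show ?thesis using j by auto
    next
      case False
      then have ja: "c j / c a \<in> OL" using ratio by blast
      have ca: "c a \<noteq> 0" using False by auto
      have "c i / c a \<in> OL" if "i \<in> I" for i
      proof -
        have "c i / c a = (c i / c j) * (c j / c a)" using j by (simp add: field_simps)
        then show ?thesis using j that ja Omult by metis
      qed
      then show ?thesis using ca by (auto intro!: bexI[of _ a] simp: field_simps)
    qed
  qed
qed

end


context vr
begin

definition good_aut :: "('L \<Rightarrow> 'L) \<Rightarrow> bool" where
  "good_aut t \<longleftrightarrow> bij t \<and> (\<forall>x y. t (x + y) = t x + t y) \<and> (\<forall>x y. t (x * y) = t x * t y)
     \<and> t 1 = 1 \<and> (\<forall>x. t x \<in> OL \<longleftrightarrow> x \<in> OL) \<and> t unif = unif"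

lemma good_frob: "good_aut frob"
proof -
  have "frob x \<in> OL \<longleftrightarrow> x \<in> OL" for x
  proof
    assume "frob x \<in> OL"
    then obtain y where "y \<in> OL" "frob x = frob y" using fO by (metis imageE)
    then show "x \<in> OL" using fbij by (metis bij_pointE)
  next
    assume "x \<in> OL" then show "frob x \<in> OL" using fO by blast
  qed
  then show ?thesis unfolding good_aut_def using fbij fadd fmult fone fpi by auto
qed

context
  fixes t assumes g: "good_aut t"
begin

lemma ga_add: "t (x + y) = t x + t y" and ga_mult: "t (x * y) = t x * t y"
  and ga_one: "t 1 = 1" and ga_O: "t x \<in> OL \<longleftrightarrow> x \<in> OL" and ga_pi: "t unif = unif"
  and ga_bij: "bij t"
  using g unfolding good_aut_def by auto

lemma ga_zero: "t 0 = 0"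
  using ga_add[of 0 0] by simp

lemma ga_minus: "t (- x) = - t x"
  using ga_add[of x "- x"] ga_zero by (simp add: eq_neg_iff_add_eq_0 add.commute)

lemma ga_diff: "t (x - y) = t x - t y"
  using ga_add[of x "- y"] ga_minus by simp

lemma ga_sum: "t (sum f A) = (\<Sum>i\<in>A. t (f i))"
  by (induction A rule: infinite_finite_induct) (auto simp: ga_zero ga_add)

lemma ga_pow: "t (x ^ k) = t x ^ k"
  by (induction k) (auto simp: ga_one ga_mult)

lemma ga_inj: "t x = t y \<longleftrightarrow> x = y"
  using ga_bij by (metis bij_pointE)

lemma ga_eq0: "t x = 0 \<longleftrightarrow> x = 0"
  using ga_inj[of x 0] ga_zero by simp

lemma ga_inverse: "t (inverse x) = inverse (t x)"
proof (cases "x = 0")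
  case True then show ?thesis by (simp add: ga_zero)
next
  case False
  have "t x * t (inverse x) = 1" using ga_mult[of x "inverse x"] False ga_one by simp
  then show ?thesis by (simp add: inverse_unique)
qed

lemma ga_div: "t (x / y) = t x / t y"
  by (simp add: divide_inverse ga_mult ga_inverse)

lemma ga_PO: "t x \<in> PO \<longleftrightarrow> x \<in> PO"
  unfolding PO_iff using ga_div[of x unif] ga_pi ga_O by metis

lemma ga_unit: "unit (t x) \<longleftrightarrow> unit x"
  unfolding unit_def using ga_O ga_eq0 ga_inverse by metis

lemma ga_inv: "good_aut (inv t)"
proof -
  have tt: "t (inv t x) = x" for x using ga_bij by (simp add: bij_is_surj surj_f_inv_f)
  have it: "inv t (t x) = x" for x using ga_bij by (simp add: bij_is_inj inv_f_f)
  have "bij (inv t)" using ga_bij by (simp add: bij_imp_bij_inv)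
  moreover have "inv t (x + y) = inv t x + inv t y" for x y
    using ga_add[of "inv t x" "inv t y"] by (metis it tt)
  moreover have "inv t (x * y) = inv t x * inv t y" for x y
    using ga_mult[of "inv t x" "inv t y"] by (metis it tt)
  moreover have "inv t 1 = 1" using ga_one it by metis
  moreover have "inv t x \<in> OL \<longleftrightarrow> x \<in> OL" for x using ga_O tt by metis
  moreover have "inv t unif = unif" using ga_pi it by metis
  ultimately show ?thesis unfolding good_aut_def by blast
qed

lemma ga_funpow: "good_aut (t ^^ k)"
proof (induction k)
  case 0 then show ?case unfolding good_aut_def by auto
next
  case (Suc k)
  then show ?case unfolding good_aut_def using ga_add ga_mult ga_one ga_O ga_pi ga_bij
    by (auto intro: bij_comp)
qed


end

lemma good_finv: "good_aut (inv frob)"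
  using ga_inv[OF good_frob] .

lemma pow_cong: "x \<in> OL \<Longrightarrow> y \<in> OL \<Longrightarrow> x - y \<in> PO \<Longrightarrow> x ^ m - y ^ m \<in> PO"
proof (induction m)
  case 0 then show ?case by simp
next
  case (Suc m)
  have "x ^ Suc m - y ^ Suc m = x ^ m * (x - y) + (x ^ m - y ^ m) * y"
    by (simp add: algebra_simps)
  moreover have "x ^ m * (x - y) \<in> PO" using Suc by (intro PO_multl Opow)
  moreover have "(x ^ m - y ^ m) * y \<in> PO" using Suc by (intro PO_multr) auto
  ultimately show ?case by (metis PO_add)
qed

lemma frob_res_pow: "s \<in> OL \<Longrightarrow> (frob ^^ k) s - s ^ (q ^ k) \<in> PO"
proof (induction k)
  case 0 then show ?case by simp
next
  case (Suc k)
  have O1: "(frob ^^ k) s \<in> OL" using ga_O[OF ga_funpow[OF good_frob]] Suc by blast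
  have "(frob ^^ Suc k) s - s ^ (q ^ Suc k) =
        (frob ((frob ^^ k) s) - ((frob ^^ k) s) ^ q) + (((frob ^^ k) s) ^ q - (s ^ (q ^ k)) ^ q)"
  proof -
    have "s ^ (q ^ Suc k) = (s ^ (q ^ k)) ^ q" by (simp only: power_Suc2 power_mult)
    then show ?thesis by simp
  qed
  moreover have "frob ((frob ^^ k) s) - ((frob ^^ k) s) ^ q \<in> PO" using fres O1 by blast
  moreover have "((frob ^^ k) s) ^ q - (s ^ (q ^ k)) ^ q \<in> PO"
    using pow_cong[OF O1 _ Suc.IH] Suc.prems by auto
  ultimately show ?case by (metis PO_add)
qed

lemma decomp_O:
  assumes "x \<in> OL" "x \<noteq> 0"
  shows "\<exists>m u. unit u \<and> x = unif ^ m * u"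
proof -
  have mem: "x \<in> ideal_pow OL unif k \<longleftrightarrow> x / unif ^ k \<in> OL" for k
  proof
    assume "x \<in> ideal_pow OL unif k"
    then obtain y where "y \<in> OL" "x = unif ^ k * y" unfolding ideal_pow_def by auto
    then show "x / unif ^ k \<in> OL" by simp
  next
    assume "x / unif ^ k \<in> OL"
    moreover have "x = unif ^ k * (x / unif ^ k)" by simp
    ultimately show "x \<in> ideal_pow OL unif k" unfolding ideal_pow_def by blast
  qed
  have "\<exists>k. x \<notin> ideal_pow OL unif k"
  proof (rule ccontr)
    assume "\<not> ?thesis"
    then have "\<forall>k. x \<in> ideal_pow OL unif k" by simp
    then have "x = 0" by (rule discr)
    then show False using assms by simp
  qed
  then obtain k0 where k0: "x \<notin> ideal_pow OL unif k0" by blast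
  define k where "k = (LEAST k. x \<notin> ideal_pow OL unif k)"
  have k: "x \<notin> ideal_pow OL unif k" "\<forall>j<k. x \<in> ideal_pow OL unif j"
    unfolding k_def using LeastI[of "\<lambda>k. x \<notin> ideal_pow OL unif k", OF k0] apply blast
    using not_less_Least[of _ "\<lambda>k. x \<notin> ideal_pow OL unif k"] by blast
  have "x \<in> ideal_pow OL unif 0" using mem[of 0] assms by simp
  then have "k \<noteq> 0" using k(1) by metis
  then obtain m where m: "k = Suc m" by (cases k) auto
  define u where "u = x / unif ^ m"
  have uO: "u \<in> OL" using k(2) m mem[of m] u_def by auto
  have "u / unif = x / unif ^ k" unfolding u_def m by simp
  then have "u / unif \<notin> OL" using k(1) mem[of k] by simp
  then have "u \<notin> PO" by (simp add: PO_iff)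
  then have "unit u" using uO O_nonunit by blast
  moreover have "x = unif ^ m * u" unfolding u_def by simp
  ultimately show ?thesis by blast
qed

lemma ratio_unit:
  assumes g: "good_aut t" and z: "z \<noteq> 0"
  shows "unit (t z / z)"
proof -
  have A: "unit (t x / x)" if xx: "x \<in> OL" "x \<noteq> 0" for x
  proof -
    obtain m u where mu: "unit u" "x = unif ^ m * u" using decomp_O[OF xx] by blast
    have tx: "t x = unif ^ m * t u" unfolding mu(2) ga_mult[OF g] ga_pow[OF g] ga_pi[OF g] ..
    have "t x / x = t u / u" unfolding tx by (simp add: mu(2))
    moreover have "unit (t u)" using mu(1) ga_unit[OF g] by blast
    ultimately show ?thesis using unit_div[OF _ mu(1)] by simp
  qed
  show ?thesis
  proof (cases "z \<in> OL")
    case True then show ?thesis using A z by blast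
  next
    case False
    then have "inverse z \<in> OL" by (rule Oinv)
    moreover have "inverse z \<noteq> 0" using z by simp
    ultimately have "unit (t (inverse z) / inverse z)" by (rule A)
    then have "unit (inverse (t (inverse z) / inverse z))" by (rule unit_inverse)
    moreover have "inverse (t (inverse z) / inverse z) = t z / z"
      unfolding ga_inverse[OF g] by (simp add: divide_inverse mult.commute)
    ultimately show ?thesis by simp
  qed
qed

lemma pow_PO: "d > 0 \<Longrightarrow> unif ^ d \<in> PO"
proof -
  assume "d > 0"
  then have "unif ^ d = unif * unif ^ (d - 1)" by (cases d) auto
  then show ?thesis using PO_mem[of "unif ^ (d - 1)"] Opow[OF piO] by simp
qed

lemma pow_ratio_unit: "unit (unif ^ a / unif ^ b) \<Longrightarrow> a = b"
proof (rule ccontr)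
  assume u: "unit (unif ^ a / unif ^ b)" and ne: "a \<noteq> b"
  show False
  proof (cases "a < b")
    case True
    then have "unif ^ a / unif ^ b = inverse (unif ^ (b - a))"
      by (simp add: power_diff field_simps)
    then have "unit (inverse (inverse (unif ^ (b - a))))" using u unit_inverse by metis
    then have "unit (unif ^ (b - a))" by simp
    moreover have "unif ^ (b - a) \<in> PO" using True pow_PO by simp
    ultimately show False using unit_not_PO by blast
  next
    case False
    then have "b < a" using ne by simp
    then have "unif ^ a / unif ^ b = unif ^ (a - b)" by (simp add: power_diff)
    then have "unit (unif ^ (a - b))" using u by simp
    moreover have "unif ^ (a - b) \<in> PO" using \<open>b < a\<close> pow_PO by simp
    ultimately show False using unit_not_PO by blast
  qed
qed

end


context vr
begin

definition Omod :: "('L ^ 'n::finite) set \<Rightarrow> bool" where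
  "Omod S \<longleftrightarrow> 0 \<in> S \<and> (\<forall>x\<in>S. \<forall>y\<in>S. x + y \<in> S) \<and> (\<forall>c\<in>OL. \<forall>x\<in>S. c *s x \<in> S)"

lemma Omod_0: "Omod S \<Longrightarrow> 0 \<in> S"
  and Omod_add: "Omod S \<Longrightarrow> x \<in> S \<Longrightarrow> y \<in> S \<Longrightarrow> x + y \<in> S"
  and Omod_scale: "Omod S \<Longrightarrow> c \<in> OL \<Longrightarrow> x \<in> S \<Longrightarrow> c *s x \<in> S"
  unfolding Omod_def by auto

lemma Omod_neg: "Omod S \<Longrightarrow> x \<in> S \<Longrightarrow> - x \<in> S"
  using Omod_scale[of S "-1" x] by (simp add: Ominus)

lemma Omod_diff: "Omod S \<Longrightarrow> x \<in> S \<Longrightarrow> y \<in> S \<Longrightarrow> x - y \<in> S"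
  using Omod_add[of S x "- y"] Omod_neg[of S y] by simp

lemma Omod_sum: "Omod S \<Longrightarrow> (\<And>i. i \<in> A \<Longrightarrow> f i \<in> S) \<Longrightarrow> sum f A \<in> S"
  by (induction A rule: infinite_finite_induct) (auto simp: Omod_0 Omod_add)

lemma Omod_PO:
  assumes "Omod S" "unif *s x \<in> S" "c \<in> PO"
  shows "c *s x \<in> S"
proof -
  have "c *s x = (c / unif) *s (unif *s x)" by simp
  moreover have "c / unif \<in> OL" using assms(3) PO_iff by blast
  ultimately show ?thesis using Omod_scale[OF assms(1)] assms(2) by metis
qed

lemma span_memI: "(\<And>i. c i \<in> OL) \<Longrightarrow> x = (\<Sum>i\<in>UNIV. c i *s B i) \<Longrightarrow> x \<in> O_span OL B"
  unfolding O_span_def by blast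

lemma span_memE: "x \<in> O_span OL B \<Longrightarrow> (\<And>c. (\<And>i. c i \<in> OL) \<Longrightarrow> x = (\<Sum>i\<in>UNIV. c i *s B i) \<Longrightarrow> P) \<Longrightarrow> P"
  unfolding O_span_def by blast

lemma Omod_span: "Omod (O_span OL B)"
proof -
  have "0 \<in> O_span OL B" unfolding O_span_def by (rule CollectI, rule exI[of _ "\<lambda>i. 0"]) simp
  moreover have "x + y \<in> O_span OL B" if xy: "x \<in> O_span OL B" "y \<in> O_span OL B" for x y
  proof -
    obtain a b where "x = (\<Sum>i\<in>UNIV. a i *s B i)" "\<forall>i. a i \<in> OL"
        "y = (\<Sum>i\<in>UNIV. b i *s B i)" "\<forall>i. b i \<in> OL"
      using xy unfolding O_span_def by blast
    then have "x + y = (\<Sum>i\<in>UNIV. (a i + b i) *s B i)" "\<forall>i. a i + b i \<in> OL"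
      by (auto simp: sum.distrib vec.scale_left_distrib)
    then show ?thesis by (intro span_memI[of "\<lambda>i. a i + b i"]) auto
  qed
  moreover have "c *s x \<in> O_span OL B" if cx: "c \<in> OL" "x \<in> O_span OL B" for c x
  proof -
    obtain a where "x = (\<Sum>i\<in>UNIV. a i *s B i)" "\<forall>i. a i \<in> OL"
      using cx unfolding O_span_def by blast
    then have "c *s x = (\<Sum>i\<in>UNIV. (c * a i) *s B i)" "\<forall>i. c * a i \<in> OL"
      using cx by (auto simp: vec.scale_sum_right)
    then show ?thesis by (intro span_memI[of "\<lambda>i. c * a i"]) auto
  qed
  ultimately show ?thesis unfolding Omod_def by blast
qed

lemma span_base: "B i \<in> O_span OL B"
proof -
  have "(\<Sum>j\<in>UNIV. (if j = i then 1 else 0) *s B j) = (\<Sum>j\<in>UNIV. if j = i then B j else 0)"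
    by (rule sum.cong) auto
  then have "B i = (\<Sum>j\<in>UNIV. (if j = i then 1 else 0) *s B j)" by simp
  then show ?thesis unfolding O_span_def by force
qed

lemma span_sub: "Omod S \<Longrightarrow> (\<And>i. B i \<in> S) \<Longrightarrow> O_span OL B \<subseteq> S"
  unfolding O_span_def by (auto intro!: Omod_sum Omod_scale)

definition semilin :: "('L \<Rightarrow> 'L) \<Rightarrow> ('L ^ 'n::finite \<Rightarrow> 'L ^ 'n) \<Rightarrow> bool" where
  "semilin t H \<longleftrightarrow> (\<forall>x y. H (x + y) = H x + H y) \<and> (\<forall>c x. H (c *s x) = t c *s H x)"

lemma sl_add: "semilin t H \<Longrightarrow> H (x + y) = H x + H y"
  and sl_scale: "semilin t H \<Longrightarrow> H (c *s x) = t c *s H x"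
  unfolding semilin_def by auto

lemma sl_0: "semilin t H \<Longrightarrow> H 0 = 0"
  using sl_add[of t H 0 0] by simp

lemma sl_sum: "semilin t H \<Longrightarrow> H (sum f A) = (\<Sum>i\<in>A. H (f i))"
  by (induction A rule: infinite_finite_induct) (auto simp: sl_0 sl_add)

lemma sl_neg: "semilin t H \<Longrightarrow> H (- x) = - H x"
  using sl_add[of t H x "- x"] sl_0[of t H] by (simp add: eq_neg_iff_add_eq_0 add.commute)

lemma sl_diff: "semilin t H \<Longrightarrow> H (x - y) = H x - H y"
  using sl_add[of t H x "- y"] sl_neg[of t H y] by simp

lemma sl_comb: "semilin t H \<Longrightarrow> H (\<Sum>i\<in>A. a i *s v i) = (\<Sum>i\<in>A. t (a i) *s H (v i))"
  by (simp add: sl_sum sl_scale)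

lemma dep_L:
  fixes u :: "nat \<Rightarrow> 'L ^ 'n::finite"
  shows "\<exists>c. (\<exists>i\<le>CARD('n). c i \<noteq> 0) \<and> (\<Sum>i\<le>CARD('n). c i *s u i) = 0"
proof (cases "inj_on u {..CARD('n)}")
  case False
  then obtain i j where ij: "i \<le> CARD('n)" "j \<le> CARD('n)" "i \<noteq> j" "u i = u j"
    unfolding inj_on_def by auto
  define c where "c k = (if k = i then 1 else if k = j then -1 else (0::'L))" for k
  have "(\<Sum>k\<le>CARD('n). c k *s u k) = (\<Sum>k\<in>{i,j}. c k *s u k)"
    by (rule sum.mono_neutral_right) (use ij in \<open>auto simp: c_def\<close>)
  also have "\<dots> = 0" using ij by (simp add: c_def)
  finally show ?thesis using ij by (intro exI[of _ c]) (auto simp: c_def)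
next
  case True
  let ?U = "u ` {..CARD('n)}"
  have "card ?U = Suc CARD('n)" using True by (simp add: card_image)
  then have "\<not> vec.independent ?U"
    using vec.independent_card_le_dim[of ?U UNIV] vec.dim_UNIV by (auto simp: card_cart_basis)
  then obtain c where c: "(\<Sum>v\<in>?U. c v *s v) = 0" "\<exists>v\<in>?U. c v \<noteq> 0"
    unfolding vec.independent_explicit by auto
  have "(\<Sum>i\<le>CARD('n). c (u i) *s u i) = (\<Sum>v\<in>?U. c v *s v)"
    using sum.reindex[OF True, of "\<lambda>v. c v *s v"] by simp
  then show ?thesis using c by (intro exI[of _ "\<lambda>i. c (u i)"]) auto
qed

lemma dep_O:
  fixes u :: "nat \<Rightarrow> 'L ^ 'n::finite"
  shows "\<exists>a. (\<forall>i\<le>CARD('n). a i \<in> OL) \<and> (\<exists>i\<le>CARD('n). unit (a i)) \<and> (\<Sum>i\<le>CARD('n). a i *s u i) = 0"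
proof -
  obtain c i0 where c: "i0 \<le> CARD('n)" "c i0 \<noteq> 0" "(\<Sum>i\<le>CARD('n). c i *s u i) = 0"
    using dep_L[of u] by blast
  obtain j where j: "j \<le> CARD('n)" "c j \<noteq> 0" "\<forall>i\<le>CARD('n). c i / c j \<in> OL"
    using exists_max[of "{..CARD('n)}" i0 c] c by auto
  have "(\<Sum>i\<le>CARD('n). (c i / c j) *s u i) = (1 / c j) *s (\<Sum>i\<le>CARD('n). c i *s u i)"
    by (simp add: vec.scale_sum_right)
  also have "\<dots> = 0" using c by simp
  finally show ?thesis using j by (intro exI[of _ "\<lambda>i. c i / c j"]) auto
qed

end


context vr
begin

definition RootProp :: "('L \<Rightarrow> 'L) \<Rightarrow> bool" where
  "RootProp t \<longleftrightarrow> (\<forall>e E. (\<forall>j\<le>e. E j \<in> OL) \<longrightarrow> unit (E 0) \<longrightarrow>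
      (\<exists>s. unit s \<and> (\<Sum>j\<le>e. (t ^^ (Suc e - j)) s * E j) - s \<in> PO))"

lemma eigen:
  fixes H :: "'L ^ 'n::finite \<Rightarrow> 'L ^ 'n" and P Q :: "('L ^ 'n) set"
  assumes g: "good_aut t" and root: "RootProp t" and sl: "semilin t H"
    and QM: "Omod Q" and PM: "Omod P" and PQ: "P \<subseteq> Q" and piQ: "\<And>x. x \<in> Q \<Longrightarrow> unif *s x \<in> P"
    and HQ: "\<And>x. x \<in> Q \<Longrightarrow> H x \<in> Q" and HP: "\<And>x. x \<in> P \<Longrightarrow> H x \<in> P"
    and inj: "\<And>x. x \<in> Q \<Longrightarrow> H x \<in> P \<Longrightarrow> x \<in> P"
    and w: "w \<in> Q" "w \<notin> P"
  shows "\<exists>y\<in>Q. y \<notin> P \<and> (\<exists>p\<in>P. \<exists>c\<in>OL. H y = p + c *s y)"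
proof -
  define u where "u i = (H ^^ i) w" for i
  have uS: "u (Suc i) = H (u i)" for i by (simp add: u_def)
  have uQ: "u i \<in> Q" for i by (induction i) (auto simp: u_def w HQ)
  have POQ: "c *s x \<in> P" if "c \<in> PO" "x \<in> Q" for c x
    using Omod_PO[OF PM piQ[OF that(2)] that(1)] .
  have OQ: "c *s x \<in> Q" if "c \<in> OL" "x \<in> Q" for c x using Omod_scale[OF QM that] .
  have OP: "c *s x \<in> P" if "c \<in> OL" "x \<in> P" for c x using Omod_scale[OF PM that] .
  define gen where "gen m = {p + (\<Sum>i<m. a i *s u i) | p a. p \<in> P \<and> (\<forall>i<m. a i \<in> OL)}" for m
  have genI: "p + (\<Sum>i<m. a i *s u i) \<in> gen m" if "p \<in> P" "\<And>i. i < m \<Longrightarrow> a i \<in> OL" for p a m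
    unfolding gen_def using that by blast
  define Rel where "Rel m \<longleftrightarrow> u m \<in> gen m" for m
  have Rel0: "\<not> Rel 0" using w by (simp add: Rel_def gen_def u_def)
  have ex: "\<exists>m. Rel m"
  proof -
    obtain a where a: "\<forall>i\<le>CARD('n). a i \<in> OL" "\<exists>i\<le>CARD('n). unit (a i)"
        "(\<Sum>i\<le>CARD('n). a i *s u i) = 0"
      using dep_O[of u] by blast
    define m where "m = (GREATEST i. i \<le> CARD('n) \<and> unit (a i))"
    have m: "m \<le> CARD('n)" "unit (a m)"
      using GreatestI_nat[of "\<lambda>i. i \<le> CARD('n) \<and> unit (a i)" _ "CARD('n)"] a(2) unfolding m_def
      by auto
    have big: "a i \<in> PO" if "m < i" "i \<le> CARD('n)" for i
    proof -
      have "\<not> unit (a i)"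
        using Greatest_le_nat[of "\<lambda>i. i \<le> CARD('n) \<and> unit (a i)" i "CARD('n)"] that unfolding m_def
        by auto
      then show ?thesis using a(1) that O_nonunit by auto
    qed
    have split: "{..CARD('n)} = {..<m} \<union> {m} \<union> {m<..CARD('n)}" using m(1) by auto
    have "(\<Sum>i\<le>CARD('n). a i *s u i) = (\<Sum>i<m. a i *s u i) + a m *s u m + (\<Sum>i\<in>{m<..CARD('n)}. a i *s u i)"
      unfolding split by (subst sum.union_disjoint; auto)+
    then have eq: "a m *s u m = - (\<Sum>i\<in>{m<..CARD('n)}. a i *s u i) - (\<Sum>i<m. a i *s u i)"
      using a(3) by (simp add: algebra_simps eq_neg_iff_add_eq_0)
    have s: "- (\<Sum>i\<in>{m<..CARD('n)}. a i *s u i) \<in> P"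
      by (intro Omod_neg[OF PM] Omod_sum[OF PM] POQ big uQ) auto
    have "u m = (1 / a m) *s (a m *s u m)" using unit_nz[OF m(2)] by simp
    also have "\<dots> = (1 / a m) *s (- (\<Sum>i\<in>{m<..CARD('n)}. a i *s u i)) + (\<Sum>i<m. (- a i / a m) *s u i)"
      unfolding eq by (simp add: vec.scale_right_diff_distrib vec.scale_sum_right sum_negf)
    finally have eqm: "u m = (1 / a m) *s (- (\<Sum>i\<in>{m<..CARD('n)}. a i *s u i)) + (\<Sum>i<m. (- a i / a m) *s u i)" .
    have "(1 / a m) *s (- (\<Sum>i\<in>{m<..CARD('n)}. a i *s u i)) + (\<Sum>i<m. (- a i / a m) *s u i) \<in> gen m"
      using m(2) a(1) m(1) by (intro genI OP s) (auto simp: unit_def divide_inverse intro!: Ominus Omult)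
    then have "u m \<in> gen m" unfolding eqm[symmetric] .
    then show ?thesis unfolding Rel_def by blast
  qed
  define d where "d = (LEAST m. Rel m)"
  have dRel: "Rel d" unfolding d_def using ex by (metis LeastI)
  have dmin: "\<not> Rel k" if "k < d" for k using that not_less_Least unfolding d_def by blast
  have "d \<noteq> 0" using dRel Rel0 by metis
  then obtain e where de: "d = Suc e" by (cases d) auto
  obtain p0 c where p0: "p0 \<in> P" and c: "\<And>i. i < d \<Longrightarrow> c i \<in> OL"
      and ud: "u d = p0 + (\<Sum>i<d. c i *s u i)"
    using dRel unfolding Rel_def gen_def by blast
  have tinvO: "inv t x \<in> OL" if "x \<in> OL" for x using ga_O[OF ga_inv[OF g]] that by blast
  have tinv: "t (inv t x) = x" for x using ga_bij[OF g] by (simp add: bij_is_surj surj_f_inv_f)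
  have c0: "unit (c 0)"
  proof (rule ccontr)
    assume "\<not> unit (c 0)"
    then have c0P: "c 0 \<in> PO" using c[of 0] de O_nonunit by auto
    define z where "z = u e - (\<Sum>i<e. inv t (c (Suc i)) *s u i)"
    have zQ: "z \<in> Q" unfolding z_def
      using c de by (intro Omod_diff[OF QM] uQ Omod_sum[OF QM] OQ tinvO) auto
    have "H z = u d - (\<Sum>i<e. c (Suc i) *s u (Suc i))"
      unfolding z_def sl_diff[OF sl] sl_comb[OF sl] tinv uS de ..
    also have "\<dots> = p0 + c 0 *s u 0"
    proof -
      have "(\<Sum>i<Suc e. c i *s u i) = c 0 *s u 0 + (\<Sum>i<e. c (Suc i) *s u (Suc i))"
        by (rule sum.lessThan_Suc_shift)
      then show ?thesis using ud de by simp
    qed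
    finally have "H z \<in> P" using p0 c0P by (metis Omod_add[OF PM] POQ uQ)
    then have "z \<in> P" using inj zQ by blast
    then have "u e = z + (\<Sum>i<e. inv t (c (Suc i)) *s u i)" "z \<in> P" unfolding z_def by auto
    then have "Rel e" unfolding Rel_def using c de by (metis genI tinvO Suc_mono)
    then show False using dmin de by auto
  qed
  define E where "E j = (t ^^ (e - j)) (c j)" for j
  have EO: "\<forall>j\<le>e. E j \<in> OL" unfolding E_def using c de ga_O[OF ga_funpow[OF g]] by auto
  have E0: "unit (E 0)" unfolding E_def using c0 ga_unit[OF ga_funpow[OF g]] by auto
  obtain s where s: "unit s" and sroot: "(\<Sum>j\<le>e. (t ^^ (Suc e - j)) s * E j) - s \<in> PO"
    using root EO E0 unfolding RootProp_def by blast
  define b where "b i = (\<Sum>j\<le>i. (t ^^ (Suc i - j)) s * (t ^^ (i - j)) (c j))" for i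
  have b0: "b 0 = t s * c 0" by (simp add: b_def)
  have bS: "b (Suc i) = t (b i) + t s * c (Suc i)" for i
  proof -
    have "t (b i) = (\<Sum>j\<le>i. (t ^^ (Suc (Suc i) - j)) s * (t ^^ (Suc i - j)) (c j))"
      unfolding b_def ga_sum[OF g] ga_mult[OF g]
      by (rule sum.cong) (auto simp: Suc_diff_le)
    then show ?thesis unfolding b_def by simp
  qed
  have bO: "b i \<in> OL" if "i \<le> e" for i
    unfolding b_def using that de c s ga_O[OF ga_funpow[OF g]] unit_O
    by (intro Osum Omult) auto
  have be: "b e = (\<Sum>j\<le>e. (t ^^ (Suc e - j)) s * E j)"
    unfolding b_def E_def ..
  have beu: "unit (b e)" using unit_add_PO[OF s sroot] be by simp
  define y where "y = (\<Sum>i<d. b i *s u i)"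
  have yQ: "y \<in> Q" unfolding y_def using bO de by (intro Omod_sum[OF QM] OQ uQ) auto
  define S where "S = (\<Sum>i<d. c i *s u i)"
  have SQ: "S \<in> Q" unfolding S_def using c by (intro Omod_sum[OF QM] OQ uQ) auto
  have y2: "y = (\<Sum>i<e. t (b i) *s u (Suc i)) + t s *s S"
  proof -
    have "y = b 0 *s u 0 + (\<Sum>i<e. b (Suc i) *s u (Suc i))"
      unfolding y_def de sum.lessThan_Suc_shift ..
    also have "\<dots> = t s *s (c 0 *s u 0) + (\<Sum>i<e. t (b i) *s u (Suc i)) + (\<Sum>i<e. t s *s (c (Suc i) *s u (Suc i)))"
      unfolding b0 bS by (simp add: vec.scale_left_distrib sum.distrib)
    also have "\<dots> = (\<Sum>i<e. t (b i) *s u (Suc i)) + t s *s S"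
      unfolding S_def de sum.lessThan_Suc_shift by (simp add: vec.scale_right_distrib vec.scale_sum_right)
    finally show ?thesis .
  qed
  have Hy: "H y = (\<Sum>i<e. t (b i) *s u (Suc i)) + t (b e) *s (p0 + S)"
  proof -
    have "H y = (\<Sum>i<d. t (b i) *s u (Suc i))" unfolding y_def sl_comb[OF sl] uS ..
    also have "\<dots> = (\<Sum>i<e. t (b i) *s u (Suc i)) + t (b e) *s u d" unfolding de by simp
    also have "u d = p0 + S" unfolding S_def by (rule ud)
    finally show ?thesis .
  qed
  have diff: "H y = (t (b e) *s p0 + (t (b e - s)) *s S) + 1 *s y"
  proof -
    have alg: "Y' = (\<beta> *s pp + (\<beta> - \<alpha>) *s SS) + 1 *s Y"
      if "Y' = A + \<beta> *s (pp + SS)" "Y = A + \<alpha> *s SS"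
      for Y' Y A SS pp :: "'L ^ 'n" and \<alpha> \<beta> :: 'L
      using that by (simp add: vec.scale_right_distrib vec.scale_left_diff_distrib)
    show ?thesis unfolding ga_diff[OF g] by (rule alg[OF Hy y2])
  qed
  have tbO: "t (b e) \<in> OL" using bO[of e] ga_O[OF g] by auto
  have PO1: "t (b e - s) \<in> PO" using sroot be ga_PO[OF g] by auto
  have inP: "t (b e) *s p0 + (t (b e - s)) *s S \<in> P"
    by (intro Omod_add[OF PM] OP tbO p0 POQ PO1 SQ)
  have ynP: "y \<notin> P"
  proof
    assume yP: "y \<in> P"
    have "y = (\<Sum>i<e. b i *s u i) + b e *s u e" unfolding y_def de by simp
    then have "u e = (1 / b e) *s y + (\<Sum>i<e. (- b i / b e) *s u i)"
      using unit_nz[OF beu] by (simp add: vec.scale_right_distrib vec.scale_sum_right algebra_simps sum_negf)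
    moreover have "(1 / b e) *s y \<in> P" using beu yP unfolding unit_def by (intro OP) (auto simp: divide_inverse)
    moreover have "- b i / b e \<in> OL" if "i < e" for i
      using bO[of i] that beu unfolding unit_def by (auto simp: divide_inverse intro!: Omult Ominus)
    ultimately have "Rel e" unfolding Rel_def by (metis genI)
    then show False using dmin de by auto
  qed
  show ?thesis using yQ ynP inP diff O1 by blast
qed

end


context vr
begin

lemma GS:
  fixes N :: nat and \<kappa> :: "nat \<Rightarrow> nat" and e :: "nat \<Rightarrow> 'L"
  assumes N: "N \<ge> 1" and inj: "inj_on \<kappa> {..N}" and rng: "\<And>j. j \<le> N \<Longrightarrow> \<kappa> j \<le> N"
    and ja: "ja \<le> N" "\<kappa> ja = 0" "unit (e ja)" and jb: "jb \<le> N" "\<kappa> jb = N" "unit (e jb)"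
    and eO: "\<And>j. j \<le> N \<Longrightarrow> e j \<in> OL"
  shows "\<exists>s. unit s \<and> (\<Sum>j\<le>N. e j * (frob ^^ \<kappa> j) s) \<in> PO"
proof -
  have q2: "q \<ge> 2" by (rule q_ge2)
  define D where "D = q ^ N - 1"
  have qpos: "q ^ k \<ge> 1" for k using q2 by simp
  have "q ^ N \<ge> q ^ 1" using q2 N by (intro power_increasing) auto
  then have D1: "D \<ge> 1" unfolding D_def using q2 by simp
  define ex where "ex j = q ^ \<kappa> j - 1" for j
  have exD: "ex j \<le> D" if "j \<le> N" for j
  proof -
    have "q ^ \<kappa> j \<le> q ^ N" using rng[OF that] q2 by (intro power_increasing) auto
    then show ?thesis unfolding ex_def D_def by simp
  qed
  have exinj: "i = j" if "i \<le> N" "j \<le> N" "ex i = ex j" for i j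
  proof -
    have "q ^ \<kappa> i = q ^ \<kappa> j" using that(3) qpos[of "\<kappa> i"] qpos[of "\<kappa> j"] unfolding ex_def by linarith
    then have "\<kappa> i = \<kappa> j" using q2 by simp
    then show ?thesis using inj that unfolding inj_on_def by auto
  qed
  have exjb: "ex jb = D" unfolding ex_def D_def using jb by simp
  have exja: "ex ja = 0" unfolding ex_def using ja by simp
  define A where "A k = (\<Sum>j\<in>{j. j \<in> {..N} \<and> ex j = k}. e j)" for k
  have AD: "A D = e jb"
  proof -
    have "{j. j \<in> {..N} \<and> ex j = D} = {jb}" using exinj exjb jb by auto
    then show ?thesis unfolding A_def by simp
  qed
  have A0: "A 0 = e ja"
  proof -
    have "{j. j \<in> {..N} \<and> ex j = 0} = {ja}" using exinj exja ja by auto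
    then show ?thesis unfolding A_def by simp
  qed
  have AO: "A k \<in> OL" for k unfolding A_def using eO by (intro Osum) auto
  have ADu: "unit (A D)" using AD jb by simp
  have grp: "(\<Sum>k\<le>D. A k * x ^ k) = (\<Sum>j\<le>N. e j * x ^ ex j)" for x
  proof -
    have "(\<Sum>j\<le>N. e j * x ^ ex j) = (\<Sum>k\<in>{..D}. (\<Sum>j\<in>{j. j \<in> {..N} \<and> ex j = k}. e j * x ^ ex j))"
      by (rule sum.group[symmetric]) (use exD in auto)
    also have "\<dots> = (\<Sum>k\<le>D. A k * x ^ k)"
      unfolding A_def sum_distrib_right by (rule sum.cong) auto
    finally show ?thesis ..
  qed
  obtain s where sO: "s \<in> OL" and sr: "s ^ D + (\<Sum>k<D. (A k / A D) * s ^ k) \<in> PO"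
    using algcl[OF D1, of "\<lambda>k. A k / A D"] AO ADu unfolding unit_def
    by (auto simp: divide_inverse intro: Omult)
  have "A D * (s ^ D + (\<Sum>k<D. (A k / A D) * s ^ k)) = (\<Sum>k\<le>D. A k * s ^ k)"
    using unit_nz[OF ADu] by (simp add: sum_distrib_left lessThan_Suc_atMost[symmetric] algebra_simps)
  moreover have "A D * (s ^ D + (\<Sum>k<D. (A k / A D) * s ^ k)) \<in> PO" using sr by (rule PO_multl[OF AO])
  ultimately have P1: "(\<Sum>k\<le>D. A k * s ^ k) \<in> PO" by simp
  have su: "unit s"
  proof (rule ccontr)
    assume "\<not> unit s"
    then have sP: "s \<in> PO" using sO O_nonunit by blast
    obtain D' where D': "D = Suc D'" using D1 by (cases D) auto
    have spl: "(\<Sum>k\<le>D. A k * s ^ k) = A 0 + (\<Sum>k\<le>D'. A (Suc k) * s ^ Suc k)"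
      unfolding D' sum.atMost_Suc_shift by simp
    moreover have "(\<Sum>k\<le>D'. A (Suc k) * s ^ Suc k) \<in> PO"
      by (intro PO_sum) (simp add: PO_multl[OF AO] PO_multr[OF sP Opow[OF sO]])
    ultimately have "(\<Sum>k\<le>D. A k * s ^ k) - (\<Sum>k\<le>D'. A (Suc k) * s ^ Suc k) \<in> PO"
      using P1 by (intro PO_diff) auto
    then have "A 0 \<in> PO" using spl by simp
    then show False using A0 ja unit_not_PO by auto
  qed
  have P2: "(\<Sum>j\<le>N. e j * s ^ (q ^ \<kappa> j)) \<in> PO"
  proof -
    have "(\<Sum>j\<le>N. e j * s ^ (q ^ \<kappa> j)) = s * (\<Sum>j\<le>N. e j * s ^ ex j)"
      unfolding sum_distrib_left
    proof (rule sum.cong)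
      fix j assume "j \<in> {..N}"
      have "q ^ \<kappa> j = Suc (ex j)" unfolding ex_def using qpos[of "\<kappa> j"] by simp
      then show "e j * s ^ (q ^ \<kappa> j) = s * (e j * s ^ ex j)" by simp
    qed simp
    moreover have "s * (\<Sum>j\<le>N. e j * s ^ ex j) \<in> PO" using P1 unfolding grp by (rule PO_multl[OF sO])
    ultimately show ?thesis by simp
  qed
  have "(\<Sum>j\<le>N. e j * (frob ^^ \<kappa> j) s) - (\<Sum>j\<le>N. e j * s ^ (q ^ \<kappa> j))
        = (\<Sum>j\<le>N. e j * ((frob ^^ \<kappa> j) s - s ^ (q ^ \<kappa> j)))"
    by (simp add: sum_subtractf algebra_simps)
  moreover have "(\<Sum>j\<le>N. e j * ((frob ^^ \<kappa> j) s - s ^ (q ^ \<kappa> j))) \<in> PO"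
    using eO frob_res_pow[OF sO] by (intro PO_sum PO_multl) auto
  ultimately have "(\<Sum>j\<le>N. e j * (frob ^^ \<kappa> j) s) - (\<Sum>j\<le>N. e j * s ^ (q ^ \<kappa> j)) + (\<Sum>j\<le>N. e j * s ^ (q ^ \<kappa> j)) \<in> PO"
    using P2 by (intro PO_add) auto
  then have "(\<Sum>j\<le>N. e j * (frob ^^ \<kappa> j) s) \<in> PO" by simp
  then show ?thesis using su by blast
qed


lemma root_frob: "RootProp frob"
  unfolding RootProp_def
proof (intro allI impI)
  fix e :: nat and E :: "nat \<Rightarrow> 'L"
  assume EO: "\<forall>j\<le>e. E j \<in> OL" and E0: "unit (E 0)"
  define N where "N = Suc e"
  define e' where "e' j = (if j \<le> e then E j else -1)" for j
  have "\<exists>s. unit s \<and> (\<Sum>j\<le>N. e' j * (frob ^^ (N - j)) s) \<in> PO"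
  proof (rule GS[where ja = N and jb = 0])
    show "inj_on (\<lambda>j. N - j) {..N}" unfolding inj_on_def by auto
  qed (use EO E0 in \<open>auto simp: e'_def N_def\<close>)
  then obtain s where s: "unit s" "(\<Sum>j\<le>N. e' j * (frob ^^ (N - j)) s) \<in> PO" by blast
  have "(\<Sum>j\<le>N. e' j * (frob ^^ (N - j)) s) = (\<Sum>j\<le>e. (frob ^^ (Suc e - j)) s * E j) - s"
  proof -
    have "(\<Sum>j\<le>N. e' j * (frob ^^ (N - j)) s) = (\<Sum>j\<le>e. e' j * (frob ^^ (N - j)) s) + e' N * s"
      unfolding N_def by simp
    also have "(\<Sum>j\<le>e. e' j * (frob ^^ (N - j)) s) = (\<Sum>j\<le>e. (frob ^^ (Suc e - j)) s * E j)"
      by (rule sum.cong) (auto simp: e'_def N_def)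
    finally show ?thesis by (simp add: e'_def N_def)
  qed
  then show "\<exists>s. unit s \<and> (\<Sum>j\<le>e. (frob ^^ (Suc e - j)) s * E j) - s \<in> PO" using s by auto
qed

lemma funpow_inv_cancel: "bij (f :: 'a \<Rightarrow> 'a) \<Longrightarrow> (inv f ^^ k) ((f ^^ k) x) = x"
proof (induction k arbitrary: x)
  case 0 then show ?case by simp
next
  case (Suc k)
  have "(inv f ^^ Suc k) ((f ^^ Suc k) x) = (inv f ^^ k) (inv f (f ((f ^^ k) x)))"
  proof -
    have "(inv f ^^ Suc k) y = (inv f ^^ k) (inv f y)" for y by (simp only: funpow_Suc_right comp_apply)
    then show ?thesis by simp
  qed
  also have "inv f (f ((f ^^ k) x)) = (f ^^ k) x" using Suc.prems by (simp add: bij_is_inj inv_f_f)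
  finally show ?case using Suc by simp
qed

lemma root_finv: "RootProp (inv frob)"
  unfolding RootProp_def
proof (intro allI impI)
  fix e :: nat and E :: "nat \<Rightarrow> 'L"
  assume EO: "\<forall>j\<le>e. E j \<in> OL" and E0: "unit (E 0)"
  define N where "N = Suc e"
  define e' where "e' j = (if j \<le> e then E j else -1)" for j
  have "\<exists>s. unit s \<and> (\<Sum>j\<le>N. e' j * (frob ^^ (id j)) s) \<in> PO"
    by (rule GS[where ja = 0 and jb = N]) (use EO E0 in \<open>auto simp: e'_def N_def\<close>)
  then obtain s where s: "unit s" "(\<Sum>j\<le>N. e' j * (frob ^^ j) s) \<in> PO" by auto
  define t where "t = (frob ^^ N) s"
  have tu: "unit t" unfolding t_def using s(1) ga_unit[OF ga_funpow[OF good_frob]] by blast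
  have bk: "(inv frob ^^ (N - j)) t = (frob ^^ j) s" if "j \<le> N" for j
  proof -
    have "t = (frob ^^ (N - j)) ((frob ^^ j) s)" unfolding t_def
      using that by (simp add: funpow_add[symmetric, THEN fun_cong, simplified])
    then show ?thesis using funpow_inv_cancel[OF fbij] by simp
  qed
  have "(\<Sum>j\<le>N. e' j * (frob ^^ j) s) = (\<Sum>j\<le>e. (inv frob ^^ (Suc e - j)) t * E j) - t"
  proof -
    have "(\<Sum>j\<le>N. e' j * (frob ^^ j) s) = (\<Sum>j\<le>e. e' j * (frob ^^ j) s) + e' N * (frob ^^ N) s"
      unfolding N_def by simp
    also have "(\<Sum>j\<le>e. e' j * (frob ^^ j) s) = (\<Sum>j\<le>e. (inv frob ^^ (Suc e - j)) t * E j)"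
    proof (rule sum.cong)
      fix j assume "j \<in> {..e}"
      then have "j \<le> N" "N - j = Suc e - j" unfolding N_def by auto
      then show "e' j * (frob ^^ j) s = (inv frob ^^ (Suc e - j)) t * E j"
        using bk[of j] \<open>j \<in> {..e}\<close> by (simp add: e'_def)
    qed simp
    finally show ?thesis by (simp add: e'_def N_def t_def)
  qed
  then show "\<exists>t. unit t \<and> (\<Sum>j\<le>e. (inv frob ^^ (Suc e - j)) t * E j) - t \<in> PO" using s tu by auto
qed

end


context vr
begin

lemma span_sub_span: "(\<And>i. C i \<in> O_span OL D) \<Longrightarrow> O_span OL C \<subseteq> O_span OL D"
  by (rule span_sub[OF Omod_span])

lemma sl_image_span:
  assumes g: "good_aut t" and sl: "semilin t H"
  shows "H ` O_span OL C = O_span OL (\<lambda>i. H (C i))"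
proof
  show "H ` O_span OL C \<subseteq> O_span OL (\<lambda>i. H (C i))"
  proof
    fix y assume "y \<in> H ` O_span OL C"
    then obtain x where x: "x \<in> O_span OL C" "y = H x" by blast
    from x(1) obtain c where c: "\<And>i. c i \<in> OL" "x = (\<Sum>i\<in>UNIV. c i *s C i)" unfolding O_span_def by blast
    have "y = (\<Sum>i\<in>UNIV. t (c i) *s H (C i))" unfolding x(2) c(2) sl_comb[OF sl] ..
    moreover have "t (c i) \<in> OL" for i using c(1) ga_O[OF g] by blast
    ultimately show "y \<in> O_span OL (\<lambda>i. H (C i))" by (intro span_memI) auto
  qed
next
  show "O_span OL (\<lambda>i. H (C i)) \<subseteq> H ` O_span OL C"
  proof
    fix y assume "y \<in> O_span OL (\<lambda>i. H (C i))"
    then obtain d where d: "\<And>i. d i \<in> OL" "y = (\<Sum>i\<in>UNIV. d i *s H (C i))" unfolding O_span_def by blast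
    have tt: "t (inv t z) = z" for z using ga_bij[OF g] by (simp add: bij_is_surj surj_f_inv_f)
    define x where "x = (\<Sum>i\<in>UNIV. inv t (d i) *s C i)"
    have "H x = y" unfolding x_def sl_comb[OF sl] tt d(2) ..
    moreover have "x \<in> O_span OL C" unfolding x_def
      using d(1) ga_O[OF ga_inv[OF g]] by (intro span_memI) auto
    ultimately show "y \<in> H ` O_span OL C" by blast
  qed
qed

lemma sum_upd: "(\<Sum>k\<in>UNIV. c k *s (C(j := v)) k) = c j *s v + (\<Sum>k\<in>UNIV - {j}. c k *s C k)"
  for C :: "'n::finite \<Rightarrow> 'L ^ 'n"
proof -
  have "(\<Sum>k\<in>UNIV. c k *s (C(j := v)) k) = c j *s (C(j := v)) j + (\<Sum>k\<in>UNIV - {j}. c k *s (C(j := v)) k)"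
    by (rule sum.remove) auto
  also have "(\<Sum>k\<in>UNIV - {j}. c k *s (C(j := v)) k) = (\<Sum>k\<in>UNIV - {j}. c k *s C k)"
    by (rule sum.cong) auto
  finally show ?thesis by simp
qed

lemma xch_indep:
  fixes C :: "'n::finite \<Rightarrow> 'L ^ 'n"
  assumes C: "lin_indep_fam C" and nu: "\<nu> \<noteq> 0" and v: "\<nu> *s v = (\<Sum>k\<in>UNIV. a k *s C k)"
    and aj: "a j \<noteq> 0"
  shows "lin_indep_fam (C(j := v))"
  unfolding lin_indep_fam_def
proof (rule allI, rule impI)
  fix c assume c0: "(\<Sum>k\<in>UNIV. c k *s (C(j := v)) k) = 0"
  define coef where "coef k = c j * a k + (if k = j then 0 else \<nu> * c k)" for k
  have "(\<Sum>k\<in>UNIV. coef k *s C k) = c j *s (\<Sum>k\<in>UNIV. a k *s C k) + (\<Sum>k\<in>UNIV. (if k = j then 0 else \<nu> * c k) *s C k)"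
    unfolding coef_def by (simp add: vec.scale_left_distrib sum.distrib vec.scale_sum_right)
  also have "(\<Sum>k\<in>UNIV. (if k = j then 0 else \<nu> * c k) *s C k) = (\<Sum>k\<in>UNIV - {j}. (\<nu> * c k) *s C k)"
    by (subst sum.remove[of UNIV j]) (auto intro!: sum.cong)
  also have "\<dots> = \<nu> *s (\<Sum>k\<in>UNIV - {j}. c k *s C k)" by (simp add: vec.scale_sum_right)
  also have "c j *s (\<Sum>k\<in>UNIV. a k *s C k) + \<nu> *s (\<Sum>k\<in>UNIV - {j}. c k *s C k)
      = \<nu> *s (\<Sum>k\<in>UNIV. c k *s (C(j := v)) k)"
    unfolding sum_upd v[symmetric] by (simp add: vec.scale_right_distrib mult.commute)
  finally have "(\<Sum>k\<in>UNIV. coef k *s C k) = 0" using c0 by simp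
  then have z: "coef k = 0" for k using C unfolding lin_indep_fam_def by blast
  have cj: "c j = 0" using z[of j] aj by (simp add: coef_def)
  show "\<forall>k. c k = 0"
  proof
    fix k show "c k = 0"
      using z[of k] cj nu by (cases "k = j") (auto simp: coef_def)
  qed
qed

lemma xch_span:
  fixes C :: "'n::finite \<Rightarrow> 'L ^ 'n"
  assumes v: "\<nu> *s v = (\<Sum>k\<in>UNIV. a k *s C k)" and nuO: "\<nu> \<in> OL"
    and aO: "\<And>k. a k \<in> OL" and aj: "unit (a j)"
  shows "C j \<in> O_span OL (C(j := v))"
proof -
  have "\<nu> *s v = a j *s C j + (\<Sum>k\<in>UNIV - {j}. a k *s C k)"
    unfolding v by (rule sum.remove) auto
  then have e1: "a j *s C j = \<nu> *s v - (\<Sum>k\<in>UNIV - {j}. a k *s C k)" by simp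
  have "C j = (1 / a j) *s (a j *s C j)" using unit_nz[OF aj] by simp
  also have "\<dots> = (1 / a j) *s (\<nu> *s v) - (1 / a j) *s (\<Sum>k\<in>UNIV - {j}. a k *s C k)"
    unfolding e1 by (rule vec.scale_right_diff_distrib)
  also have "\<dots> = (\<nu> / a j) *s v - (\<Sum>k\<in>UNIV - {j}. (a k / a j) *s C k)"
    by (simp add: vec.scale_sum_right)
  also have "\<dots> = (\<nu> / a j) *s (C(j := v)) j - (\<Sum>k\<in>UNIV - {j}. (a k / a j) *s (C(j := v)) k)"
  proof -
    have "(\<Sum>k\<in>UNIV - {j}. (a k / a j) *s (C(j := v)) k) = (\<Sum>k\<in>UNIV - {j}. (a k / a j) *s C k)"
      by (rule sum.cong) auto
    then show ?thesis by simp
  qed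
  also have "\<dots> \<in> O_span OL (C(j := v))"
    using aj nuO aO unfolding unit_def
    by (intro Omod_diff[OF Omod_span] Omod_scale[OF Omod_span] Omod_sum[OF Omod_span] span_base)
       (auto simp: divide_inverse)
  finally show ?thesis .
qed

lemma adapted:
  fixes C :: "'n::finite \<Rightarrow> 'L ^ 'n" and N :: "('L ^ 'n) set"
  assumes C: "lin_indep_fam C" and NM: "Omod N" and Nsub: "N \<subseteq> O_span OL C"
    and piN: "\<And>x. x \<in> O_span OL C \<Longrightarrow> unif *s x \<in> N"
  shows "\<exists>C' S. lin_indep_fam C' \<and> O_span OL C' = O_span OL C \<and>
            N = O_span OL (\<lambda>i. (if i \<in> S then unif else 1) *s C' i)"
proof -
  define \<Lambda> where "\<Lambda> = O_span OL C"
  have main: "\<And>C G. lin_indep_fam C \<Longrightarrow> O_span OL C = \<Lambda> \<Longrightarrow> (\<forall>i\<in>G. C i \<in> N) \<Longrightarrow>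
      card (UNIV - G) = m \<Longrightarrow> \<exists>C' S. lin_indep_fam C' \<and> O_span OL C' = \<Lambda> \<and>
            N = O_span OL (\<lambda>i. (if i \<in> S then unif else 1) *s C' i)" for m
  proof (induction m rule: less_induct)
    case (less m C G)
    define N0 where "N0 = O_span OL (\<lambda>i. (if i \<in> UNIV - G then unif else 1) *s C i)"
    have N0N: "N0 \<subseteq> N" unfolding N0_def
    proof (rule span_sub[OF NM])
      fix i
      show "(if i \<in> UNIV - G then unif else 1) *s C i \<in> N"
      proof (cases "i \<in> G")
        case True then show ?thesis using less.prems(3) by simp
      next
        case False
        have "C i \<in> O_span OL C" by (rule span_base)
        then show ?thesis using False piN less.prems(2) unfolding \<Lambda>_def by simp
      qed
    qed
    show ?case
    proof (cases "N \<subseteq> N0")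
      case True
      then have "N = N0" using N0N by blast
      then show ?thesis using less.prems(1,2) unfolding N0_def
        by (intro exI[of _ C] exI[of _ "UNIV - G"]) simp
    next
      case False
      then obtain v where vN: "v \<in> N" and vN0: "v \<notin> N0" by blast
      have "v \<in> O_span OL C" using vN Nsub less.prems(2) unfolding \<Lambda>_def by blast
      then obtain a where aO: "\<And>k. a k \<in> OL" and va: "v = (\<Sum>k\<in>UNIV. a k *s C k)"
        unfolding O_span_def by blast
      define a' where "a' k = (if k \<in> G then 0 else a k)" for k
      define v' where "v' = (\<Sum>k\<in>UNIV. a' k *s C k)"
      have a'O: "a' k \<in> OL" for k using aO by (simp add: a'_def)
      have "v' = v - (\<Sum>k\<in>UNIV. (if k \<in> G then a k else 0) *s C k)"
        unfolding v'_def va a'_def sum_subtractf[symmetric] by (rule sum.cong) auto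
      moreover have "(\<Sum>k\<in>UNIV. (if k \<in> G then a k else 0) *s C k) \<in> N"
        using less.prems(3) aO Omod_0[OF NM] by (intro Omod_sum[OF NM]) (auto intro: Omod_scale[OF NM])
      ultimately have v'N: "v' \<in> N" using vN Omod_diff[OF NM] by simp
      have "\<exists>j. j \<notin> G \<and> unit (a j)"
      proof (rule ccontr)
        assume "\<not> ?thesis"
        then have aP: "a k \<in> PO" if "k \<notin> G" for k using that aO O_nonunit by blast
        define b where "b k = (if k \<in> G then a k else a k / unif)" for k
        have "v = (\<Sum>k\<in>UNIV. b k *s ((if k \<in> UNIV - G then unif else 1) *s C k))"
          unfolding va b_def by (rule sum.cong) auto
        moreover have "b k \<in> OL" for k using aO aP unfolding b_def PO_iff by auto
        ultimately have "v \<in> N0" unfolding N0_def by (intro span_memI) auto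
        then show False using vN0 by blast
      qed
      then obtain j where jG: "j \<notin> G" and aj: "unit (a j)" by blast
      have a'j: "a' j = a j" using jG by (simp add: a'_def)
      define C' where "C' = C(j := v')"
      have v'eq: "1 *s v' = (\<Sum>k\<in>UNIV. a' k *s C k)" unfolding v'_def by simp
      have C'ind: "lin_indep_fam C'" unfolding C'_def
        using xch_indep[OF less.prems(1) _ v'eq] a'j unit_nz[OF aj] by simp
      have sp1: "O_span OL C' \<subseteq> \<Lambda>"
      proof (rule span_sub[OF Omod_span[of C, unfolded less.prems(2)]])
        fix i show "C' i \<in> \<Lambda>"
          using v'N Nsub less.prems(2) span_base[of C i] unfolding C'_def \<Lambda>_def by auto
      qed
      have sp2: "\<Lambda> \<subseteq> O_span OL C'"
        unfolding less.prems(2)[symmetric]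
      proof (rule span_sub_span)
        fix i show "C i \<in> O_span OL C'"
        proof (cases "i = j")
          case True
          then show ?thesis unfolding C'_def using xch_span[OF v'eq O1 a'O] a'j aj by simp
        next
          case False
          then have "C i = C' i" unfolding C'_def by simp
          then show ?thesis using span_base[of C' i] by simp
        qed
      qed
      have C'N: "\<forall>i\<in>insert j G. C' i \<in> N" using v'N less.prems(3) unfolding C'_def by auto
      have "card (UNIV - insert j G) < card (UNIV - G)"
        using jG by (intro psubset_card_mono) auto
      moreover have "O_span OL C' = \<Lambda>" using sp1 sp2 by blast
      ultimately show ?thesis using less.IH[OF _ C'ind _ C'N refl] less.prems(4) by blast
    qed
  qed
  have "\<forall>i\<in>{}. C i \<in> N" by simp
  from main[OF C \<Lambda>_def[symmetric] this refl] show ?thesis unfolding \<Lambda>_def .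
qed

end


definition rmat :: "('n::finite \<Rightarrow> 'a ^ 'n) \<Rightarrow> 'a ^ 'n ^ 'n" where
  "rmat C = (\<chi> i. C i)"

lemma rmat_nth[simp]: "rmat C $ i $ j = C i $ j"
  by (simp add: rmat_def)

lemma indep_det:
  fixes C :: "'n::finite \<Rightarrow> 'a::field ^ 'n"
  assumes "lin_indep_fam C"
  shows "det (rmat C) \<noteq> 0"
proof -
  have "row i (rmat C) = C i" for i by (simp add: row_def rmat_def vec_eq_iff)
  then have "\<exists>B. rmat C ** B = mat 1"
    using assms unfolding matrix_right_invertible_independent_rows lin_indep_fam_def by simp
  then show ?thesis using invertible_right_inverse invertible_det_nz by blast
qed

lemma rmat_mul: "rmat (\<lambda>i. \<Sum>j\<in>UNIV. U $ i $ j *s C j) = U ** rmat C"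
  by (simp add: rmat_def matrix_matrix_mult_def vec_eq_iff)

definition mapm :: "('a \<Rightarrow> 'a) \<Rightarrow> 'a ^ 'n ^ 'm \<Rightarrow> 'a ^ 'n ^ 'm" where
  "mapm f A = (\<chi> i j. f (A $ i $ j))"

context vr
begin

lemma ga_prod: "good_aut t \<Longrightarrow> t (prod f A) = (\<Prod>i\<in>A. t (f i))"
  by (induction A rule: infinite_finite_induct) (auto simp: ga_one ga_mult)

lemma ga_sign: "good_aut t \<Longrightarrow> t (of_int (sign pp)) = of_int (sign pp)"
  by (cases pp rule: sign_cases) (auto simp: ga_one ga_minus)

lemma det_mapm: "good_aut t \<Longrightarrow> det (mapm t A) = t (det A)"
  unfolding det_def by (simp add: ga_sum ga_mult ga_prod ga_sign mapm_def)

lemma det_O: "(\<And>i j. U $ i $ j \<in> OL) \<Longrightarrow> det U \<in> OL"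
  unfolding det_def
proof (intro Osum Omult Oprod)
  fix pp :: "'a \<Rightarrow> 'a"
  show "of_int (sign pp) \<in> OL" by (cases pp rule: sign_cases) (auto intro: Ominus)
qed

lemma coords:
  fixes C D :: "'n::finite \<Rightarrow> 'L ^ 'n"
  assumes "\<And>i. D i \<in> O_span OL C"
  shows "\<exists>U. (\<forall>i j. U $ i $ j \<in> OL) \<and> rmat D = U ** rmat C"
proof -
  have "\<forall>i. \<exists>c. (\<forall>j. c j \<in> OL) \<and> D i = (\<Sum>j\<in>UNIV. c j *s C j)"
    using assms unfolding O_span_def by blast
  then obtain c where c: "\<And>i j. c i j \<in> OL" "\<And>i. D i = (\<Sum>j\<in>UNIV. c i j *s C j)"
    by metis
  define U where "U = (\<chi> i j. c i j)"
  have Deq: "D = (\<lambda>i. \<Sum>j\<in>UNIV. c i j *s C j)" by (intro ext) (rule c(2))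
  have "rmat D = rmat (\<lambda>i. \<Sum>j\<in>UNIV. U $ i $ j *s C j)"
    unfolding U_def Deq by simp
  then have "rmat D = U ** rmat C" unfolding rmat_mul .
  moreover have "\<forall>i j. U $ i $ j \<in> OL" using c(1) unfolding U_def by simp
  ultimately show ?thesis by blast
qed

lemma span_eq_det:
  fixes C D :: "'n::finite \<Rightarrow> 'L ^ 'n"
  assumes eq: "O_span OL C = O_span OL D" and nz: "det (rmat C) \<noteq> 0"
  shows "unit (det (rmat D) / det (rmat C))"
proof -
  obtain U where U: "\<And>i j. U $ i $ j \<in> OL" "rmat D = U ** rmat C"
    using coords[of D C] span_base[of D] eq by blast
  obtain V where V: "\<And>i j. V $ i $ j \<in> OL" "rmat C = V ** rmat D"
    using coords[of C D] span_base[of C] eq by blast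
  have "det (rmat C) = det V * det U * det (rmat C)"
    using V(2) U(2) by (metis det_mul mult.assoc)
  then have VU: "det V * det U = 1" using nz by simp
  have "det (rmat D) / det (rmat C) = det U" using U(2) nz by (simp add: det_mul)
  moreover have "unit (det U)"
    using det_O[OF U(1)] det_O[OF V(1)] VU unfolding unit_def
    by (metis inverse_unique mult.commute mult_zero_right zero_neq_one)
  ultimately show ?thesis by simp
qed

lemma det_scaled:
  fixes C :: "'n::finite \<Rightarrow> 'L ^ 'n"
  shows "det (rmat (\<lambda>i. (if i \<in> S then unif else 1) *s C i)) = unif ^ card S * det (rmat C)"
proof -
  define d where "d i = (if i \<in> S then unif else 1)" for i
  define Dg where "Dg = (\<chi> i j. if i = j then d i else (0::'L))"
  have "(Dg ** rmat C) $ i $ k = d i * C i $ k" for i k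
  proof -
    have "(Dg ** rmat C) $ i $ k = (\<Sum>j\<in>UNIV. (if i = j then d i else 0) * C j $ k)"
      by (simp add: Dg_def matrix_matrix_mult_def)
    also have "\<dots> = (\<Sum>j\<in>UNIV. if j = i then d i * C j $ k else 0)" by (rule sum.cong) auto
    finally show ?thesis by simp
  qed
  then have "rmat (\<lambda>i. d i *s C i) = Dg ** rmat C"
    by (simp add: vec_eq_iff)
  moreover have "det Dg = (\<Prod>i\<in>UNIV. d i)"
    by (subst det_diagonal) (auto simp: Dg_def)
  moreover have "(\<Prod>i\<in>UNIV. d i) = unif ^ card S"
    unfolding d_def prod.If_cases[OF finite[of UNIV]] by simp
  ultimately show ?thesis unfolding d_def by (simp add: det_mul)
qed

lemma det_sl:
  fixes H :: "'L ^ 'n::finite \<Rightarrow> 'L ^ 'n"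
  assumes g: "good_aut t" and sl: "semilin t H"
  shows "det (rmat (\<lambda>i. H (C i))) = t (det (rmat C)) * det (rmat (\<lambda>j. H (axis j 1)))"
proof -
  have "H (C i) = (\<Sum>j\<in>UNIV. t (C i $ j) *s H (axis j 1))" for i
    using sl_comb[OF sl, of "\<lambda>j. C i $ j" "\<lambda>j. axis j 1" UNIV] basis_expansion[of "C i"] by simp
  then have "rmat (\<lambda>i. H (C i)) = rmat (\<lambda>i. \<Sum>j\<in>UNIV. mapm t (rmat C) $ i $ j *s H (axis j 1))"
    by (simp add: mapm_def)
  then have "rmat (\<lambda>i. H (C i)) = mapm t (rmat C) ** rmat (\<lambda>j. H (axis j 1))"
    unfolding rmat_mul .
  then show ?thesis by (simp add: det_mul det_mapm[OF g])
qed

end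


context vr
begin

lemma count_one:
  fixes Fr :: "'L ^ 'n::finite \<Rightarrow> 'L ^ 'n"
  assumes sl: "semilin frob Fr" and C: "lin_indep_fam C"
    and h: "Fr ` O_span OL C = O_span OL (\<lambda>i. (if i \<in> S then unif else 1) *s C i)"
  shows "unit (frob (det (rmat C)) * det (rmat (\<lambda>j. Fr (axis j 1))) / (unif ^ card S * det (rmat C)))"
proof -
  have nz: "det (rmat C) \<noteq> 0" by (rule indep_det[OF C])
  have "O_span OL (\<lambda>i. (if i \<in> S then unif else 1) *s C i) = O_span OL (\<lambda>i. Fr (C i))"
    using h sl_image_span[OF good_frob sl] by simp
  moreover have "det (rmat (\<lambda>i. (if i \<in> S then unif else 1) *s C i)) \<noteq> 0"
    unfolding det_scaled using nz by simp
  ultimately have "unit (det (rmat (\<lambda>i. Fr (C i))) / det (rmat (\<lambda>i. (if i \<in> S then unif else 1) *s C i)))"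
    by (rule span_eq_det)
  moreover have "det (rmat (\<lambda>i. Fr (C i))) = frob (det (rmat C)) * det (rmat (\<lambda>j. Fr (axis j 1)))"
    by (rule det_sl[OF good_frob sl])
  ultimately show ?thesis by (simp only: det_scaled)
qed

lemma count_S:
  fixes Fr :: "'L ^ 'n::finite \<Rightarrow> 'L ^ 'n"
  assumes sl: "semilin frob Fr" and C1: "lin_indep_fam C1" and C2: "lin_indep_fam C2"
    and h1: "Fr ` O_span OL C1 = O_span OL (\<lambda>i. (if i \<in> S1 then unif else 1) *s C1 i)"
    and h2: "Fr ` O_span OL C2 = O_span OL (\<lambda>i. (if i \<in> S2 then unif else 1) *s C2 i)"
  shows "card S1 = card S2"
proof -
  define \<delta> where "\<delta> = det (rmat (\<lambda>j. Fr (axis j 1)))"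
  define d1 where "d1 = det (rmat C1)"
  define d2 where "d2 = det (rmat C2)"
  have X1: "unit (frob d1 * \<delta> / (unif ^ card S1 * d1))"
    using count_one[OF sl C1 h1] unfolding \<delta>_def d1_def .
  have X2: "unit (frob d2 * \<delta> / (unif ^ card S2 * d2))"
    using count_one[OF sl C2 h2] unfolding \<delta>_def d2_def .
  have n1: "d1 \<noteq> 0" using indep_det[OF C1] d1_def by simp
  have n2: "d2 \<noteq> 0" using indep_det[OF C2] d2_def by simp
  have R1: "unit (frob d1 / d1)" by (rule ratio_unit[OF good_frob n1])
  have R2: "unit (frob d2 / d2)" by (rule ratio_unit[OF good_frob n2])
  define x1 where "x1 = frob d1 * \<delta> / (unif ^ card S1 * d1)"
  define x2 where "x2 = frob d2 * \<delta> / (unif ^ card S2 * d2)"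
  define r1 where "r1 = frob d1 / d1"
  define r2 where "r2 = frob d2 / d2"
  have x1nz: "x1 \<noteq> 0" using unit_nz[OF X1] unfolding x1_def .
  have x2nz: "x2 \<noteq> 0" using unit_nz[OF X2] unfolding x2_def .
  have dnz: "\<delta> \<noteq> 0" using x1nz unfolding x1_def by auto
  have e1: "unif ^ card S1 = r1 * \<delta> / x1" unfolding x1_def r1_def using n1 x1nz dnz
    by (auto simp: field_simps x1_def)
  have e2: "unif ^ card S2 = r2 * \<delta> / x2" unfolding x2_def r2_def using n2 x2nz dnz
    by (auto simp: field_simps x2_def)
  have "unif ^ card S1 / unif ^ card S2 = (r1 * x2) / (r2 * x1)"
    unfolding e1 e2 using dnz x1nz x2nz by (simp add: field_simps)
  moreover have "unit ((r1 * x2) / (r2 * x1))"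
  proof -
    have "unit x1" "unit x2" "unit r1" "unit r2" using X1 X2 R1 R2 unfolding x1_def x2_def r1_def r2_def .
    then show ?thesis using unit_div unit_mult by metis
  qed
  ultimately show ?thesis using pow_ratio_unit by metis
qed

end


context vr
begin

lemma powi_chi: "unif powi (if i \<in> S then 1 else 0) = (if i \<in> S then unif else 1)"
  by simp

lemma inv_omega_E:
  assumes "inv_omega OL unif M FM r"
  obtains S B where "card S = r" "lin_indep_fam B" "M = O_span OL B"
    "FM = O_span OL (\<lambda>i. (if i \<in> S then unif else 1) *s B i)"
  using assms unfolding inv_omega_def has_inv_def powi_chi by blast

lemma lat_props:
  fixes C :: "'n::finite \<Rightarrow> 'L ^ 'n"
  assumes h: "FL = O_span OL (\<lambda>i. (if i \<in> S then unif else 1) *s C i)"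
  shows "FL \<subseteq> O_span OL C" "\<And>x. x \<in> O_span OL C \<Longrightarrow> unif *s x \<in> FL"
proof -
  show "FL \<subseteq> O_span OL C" unfolding h
    by (rule span_sub_span, rule Omod_scale[OF Omod_span]) (auto intro: span_base)
  have pC: "unif *s C i \<in> FL" for i
  proof -
    have "unif *s C i = (if i \<in> S then 1 else unif) *s ((if i \<in> S then unif else 1) *s C i)" by simp
    also have "\<dots> \<in> FL" unfolding h
      by (rule Omod_scale[OF Omod_span _ span_base]) simp
    finally show ?thesis .
  qed
  fix x assume "x \<in> O_span OL C"
  then obtain c where c: "\<And>i. c i \<in> OL" "x = (\<Sum>i\<in>UNIV. c i *s C i)" unfolding O_span_def by blast
  have ux: "unif *s x = (\<Sum>i\<in>UNIV. c i *s (unif *s C i))"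
    unfolding c(2) by (simp add: vec.scale_sum_right mult.commute)
  have FLM: "Omod FL" unfolding h by (rule Omod_span)
  have "(\<Sum>i\<in>UNIV. c i *s (unif *s C i)) \<in> FL"
    by (intro Omod_sum[OF FLM]) (rule Omod_scale[OF FLM c(1) pC])
  then show "unif *s x \<in> FL" using ux by simp
qed

lemma sl_Omod_image:
  assumes g: "good_aut t" and sl: "semilin t H" and S: "Omod S"
  shows "Omod (H ` S)"
proof -
  have tt: "t (inv t z) = z" for z using ga_bij[OF g] by (simp add: bij_is_surj surj_f_inv_f)
  have "0 \<in> H ` S" using sl_0[OF sl] Omod_0[OF S] by (metis image_eqI)
  moreover have "a + b \<in> H ` S" if ab: "a \<in> H ` S" "b \<in> H ` S" for a b
  proof -
    obtain z1 z2 where z: "z1 \<in> S" "z2 \<in> S" "a = H z1" "b = H z2" using ab by blast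
    then have "a + b = H (z1 + z2)" using sl_add[OF sl] by simp
    moreover have "z1 + z2 \<in> S" using z Omod_add[OF S] by blast
    ultimately show ?thesis by blast
  qed
  moreover have "c *s a \<in> H ` S" if ca: "c \<in> OL" "a \<in> H ` S" for c a
  proof -
    obtain z where z: "z \<in> S" "a = H z" using ca(2) by blast
    have "H (inv t c *s z) = c *s a" using sl_scale[OF sl] tt z(2) by simp
    moreover have "inv t c *s z \<in> S" using ca(1) ga_O[OF ga_inv[OF g]] z(1) by (intro Omod_scale[OF S]) auto
    ultimately show ?thesis by (metis image_eqI)
  qed
  ultimately show ?thesis unfolding Omod_def by blast
qed

lemma main:
  fixes Fr :: "'L ^ 'n::finite \<Rightarrow> 'L ^ 'n" and M M' :: "('L ^ 'n) set" and r :: nat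
  assumes F_bij: "bij Fr"
    and F_add: "\<And>x y. Fr (x + y) = Fr x + Fr y"
    and F_semilin: "\<And>c x. Fr (c *s x) = frob c *s Fr x"
    and sub1: "M' \<subset> M" and sub2: "(\<lambda>x. unif *s x) ` M \<subset> M'"
    and invM: "inv_omega OL unif M (Fr ` M) r"
    and invM': "inv_omega OL unif M' (Fr ` M') r"
  shows "\<exists>Mt. is_lattice OL Mt \<and> M' \<subseteq> Mt \<and> Mt \<subseteq> M \<and> quot_dim_one OL Mt M'
              \<and> inv_omega OL unif Mt (Fr ` Mt) r"
proof -
  have sl: "semilin frob Fr" unfolding semilin_def using F_add F_semilin by blast
  obtain S0 B where S0: "card S0 = r" and B: "lin_indep_fam B" and MB: "M = O_span OL B"
      and FMB: "Fr ` M = O_span OL (\<lambda>i. (if i \<in> S0 then unif else 1) *s B i)"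
    using invM by (rule inv_omega_E)
  obtain S1 B1 where B1: "lin_indep_fam B1" and MB1: "M' = O_span OL B1"
      and FMB1: "Fr ` M' = O_span OL (\<lambda>i. (if i \<in> S1 then unif else 1) *s B1 i)"
    using invM' by (rule inv_omega_E)
  have MM: "Omod M" unfolding MB by (rule Omod_span)
  have MM': "Omod M'" unfolding MB1 by (rule Omod_span)
  have FMsub: "Fr ` M \<subseteq> M" and piFM: "\<And>x. x \<in> M \<Longrightarrow> unif *s x \<in> Fr ` M"
    using lat_props[OF FMB] unfolding MB[symmetric] by auto
  have FM'sub: "Fr ` M' \<subseteq> M'" and piFM': "\<And>x. x \<in> M' \<Longrightarrow> unif *s x \<in> Fr ` M'"
    using lat_props[OF FMB1] unfolding MB1[symmetric] by auto
  have M'M: "M' \<subseteq> M" using sub1 by blast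
  have piM: "\<And>x. x \<in> M \<Longrightarrow> unif *s x \<in> M'" using sub2 by blast
  define Fi where "Fi = inv Fr"
  have FFi: "Fr (Fi y) = y" for y unfolding Fi_def using F_bij by (simp add: bij_is_surj surj_f_inv_f)
  have FiF: "Fi (Fr x) = x" for x unfolding Fi_def using F_bij by (simp add: bij_is_inj inv_f_f)
  have ft: "frob (inv frob c) = c" for c using fbij by (simp add: bij_is_surj surj_f_inv_f)
  have slFi: "semilin (inv frob) Fi" unfolding semilin_def
  proof (intro conjI allI)
    fix x y show "Fi (x + y) = Fi x + Fi y" by (metis FFi FiF F_add)
  next
    fix c x show "Fi (c *s x) = inv frob c *s Fi x"
      by (metis FFi FiF F_semilin ft)
  qed
  have ipi: "inv frob unif = unif" using ga_pi[OF good_finv] .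
  define G where "G x = unif *s Fi x" for x
  have slG: "semilin (inv frob) G" unfolding semilin_def G_def
    using sl_add[OF slFi] sl_scale[OF slFi] by (simp add: vec.scale_right_distrib mult.commute)
  have FG: "Fr (G x) = unif *s x" for x unfolding G_def F_semilin fpi FFi ..
  have GF: "G (Fr x) = unif *s x" for x unfolding G_def FiF ..
  have GFi: "G x = Fi (unif *s x)" for x unfolding G_def sl_scale[OF slFi] ipi ..
  have Gin: "G x \<in> L" if xL: "x \<in> L" "\<And>x. x \<in> L \<Longrightarrow> unif *s x \<in> Fr ` L" for x L
  proof -
    obtain z where "z \<in> L" "unif *s x = Fr z" using xL by blast
    then show ?thesis unfolding GFi by (simp add: FiF)
  qed
  have GM: "G x \<in> M" if "x \<in> M" for x using Gin[OF that piFM] .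
  have GM': "G x \<in> M'" if "x \<in> M'" for x using Gin[OF that piFM'] .
  have FrM: "Fr x \<in> M" if "x \<in> M" for x using FMsub that by blast
  have FrM': "Fr x \<in> M'" if "x \<in> M'" for x using FM'sub that by blast
  have finvO: "inv frob c \<in> OL" if "c \<in> OL" for c using ga_O[OF good_finv] that by blast
  have frobO: "frob c \<in> OL" if "c \<in> OL" for c using ga_O[OF good_frob] that by blast
  obtain w where w: "w \<in> M" "w \<notin> M'" using sub1 by blast
  define J where "J = {x \<in> M. G x \<in> M'}"
  have JM: "Omod J" unfolding Omod_def J_def
    using Omod_0[OF MM] Omod_0[OF MM'] sl_0[OF slG] Omod_add[OF MM] Omod_add[OF MM'] sl_add[OF slG]
      Omod_scale[OF MM] Omod_scale[OF MM'] sl_scale[OF slG] finvO by auto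
  have M'J: "M' \<subseteq> J" unfolding J_def using M'M GM' by auto
  have JsubM: "J \<subseteq> M" unfolding J_def by auto
  have triv: "\<exists>p\<in>M'. \<exists>c\<in>OL. v = p + c *s z" if vM: "v \<in> M'" for v z
    using vM by (intro bexI[of _ v] bexI[of _ 0]) auto
  have "\<exists>x. x \<in> M \<and> x \<notin> M' \<and> (\<exists>p\<in>M'. \<exists>c\<in>OL. Fr x = p + c *s x) \<and> (\<exists>p\<in>M'. \<exists>c\<in>OL. G x = p + c *s x)"
  proof (cases "\<exists>x\<in>J. x \<notin> M' \<and> Fr x \<in> M'")
    case True
    then obtain x where x: "x \<in> J" "x \<notin> M'" "Fr x \<in> M'" by blast
    then have "G x \<in> M'" "x \<in> M" unfolding J_def by auto
    then show ?thesis using x triv[of "Fr x" x] triv[of "G x" x] by blast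
  next
    case notA: False
    show ?thesis
    proof (cases "J \<subseteq> M'")
      case False
      then obtain w' where w': "w' \<in> J" "w' \<notin> M'" by blast
      have "\<exists>y\<in>J. y \<notin> M' \<and> (\<exists>p\<in>M'. \<exists>c\<in>OL. Fr y = p + c *s y)"
      proof (rule eigen[OF good_frob root_frob sl JM MM' M'J _ _ _ _ w'])
        fix x assume "x \<in> J"
        then show "unif *s x \<in> M'" using piM JsubM by blast
      next
        fix x assume xJ: "x \<in> J"
        then have "Fr x \<in> M" "G (Fr x) \<in> M'" using FrM JsubM piM GF by auto
        then show "Fr x \<in> J" unfolding J_def by blast
      next
        fix x assume "x \<in> M'" then show "Fr x \<in> M'" by (rule FrM')
      next
        fix x assume "x \<in> J" "Fr x \<in> M'" then show "x \<in> M'" using notA by blast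
      qed
      then obtain y where y: "y \<in> J" "y \<notin> M'" "\<exists>p\<in>M'. \<exists>c\<in>OL. Fr y = p + c *s y" by blast
      then have "G y \<in> M'" "y \<in> M" unfolding J_def by auto
      then show ?thesis using y triv[of "G y" y] by blast
    next
      case True
      have "\<exists>y\<in>M. y \<notin> M' \<and> (\<exists>p\<in>M'. \<exists>c\<in>OL. G y = p + c *s y)"
      proof (rule eigen[OF good_finv root_finv slG MM MM' M'M _ _ _ _ w])
        fix x assume "x \<in> M" then show "unif *s x \<in> M'" by (rule piM)
      next
        fix x assume "x \<in> M" then show "G x \<in> M" by (rule GM)
      next
        fix x assume "x \<in> M'" then show "G x \<in> M'" by (rule GM')
      next
        fix x assume "x \<in> M" "G x \<in> M'" then show "x \<in> M'" using True unfolding J_def by blast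
      qed
      then obtain y where y: "y \<in> M" "y \<notin> M'" "\<exists>p\<in>M'. \<exists>c\<in>OL. G y = p + c *s y" by blast
      have "Fr y \<in> J" unfolding J_def using FrM[OF y(1)] GF piM[OF y(1)] by simp
      then have "Fr y \<in> M'" using True by blast
      then show ?thesis using y triv[of "Fr y" y] by blast
    qed
  qed
  then obtain x where xM: "x \<in> M" and xM': "x \<notin> M'"
      and Fx: "\<exists>p\<in>M'. \<exists>c\<in>OL. Fr x = p + c *s x" and Gx: "\<exists>p\<in>M'. \<exists>c\<in>OL. G x = p + c *s x"
    by blast
  define Mt where "Mt = {y + c *s x | y c. y \<in> M' \<and> c \<in> OL}"
  have MtI: "y + c *s x \<in> Mt" if "y \<in> M'" "c \<in> OL" for y c unfolding Mt_def using that by blast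
  have M'Mt: "M' \<subseteq> Mt" using MtI[of _ 0] by auto
  have xMt: "x \<in> Mt" using MtI[OF Omod_0[OF MM'] O1] by simp
  have MtM: "Mt \<subseteq> M" unfolding Mt_def using M'M xM Omod_add[OF MM] Omod_scale[OF MM] by blast
  have MtOmod: "Omod Mt" unfolding Omod_def
  proof (intro conjI ballI)
    show "0 \<in> Mt" using M'Mt Omod_0[OF MM'] by blast
  next
    fix a b assume "a \<in> Mt" "b \<in> Mt"
    then obtain y1 c1 y2 c2 where "a = y1 + c1 *s x" "y1 \<in> M'" "c1 \<in> OL" "b = y2 + c2 *s x" "y2 \<in> M'" "c2 \<in> OL"
      unfolding Mt_def by blast
    then have e: "a + b = (y1 + y2) + (c1 + c2) *s x" and m: "y1 + y2 \<in> M'" "c1 + c2 \<in> OL"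
      using Omod_add[OF MM'] by (auto simp: vec.scale_left_distrib)
    have "(y1 + y2) + (c1 + c2) *s x \<in> Mt" using MtI[OF m] .
    then show "a + b \<in> Mt" unfolding e .
  next
    fix c a assume "c \<in> OL" "a \<in> Mt"
    then obtain y1 c1 where "a = y1 + c1 *s x" "y1 \<in> M'" "c1 \<in> OL" unfolding Mt_def by blast
    then have e: "c *s a = c *s y1 + (c * c1) *s x" and m: "c *s y1 \<in> M'" "c * c1 \<in> OL"
      using Omod_scale[OF MM'] \<open>c \<in> OL\<close> by (auto simp: vec.scale_right_distrib)
    have "c *s y1 + (c * c1) *s x \<in> Mt" using MtI[OF m] .
    then show "c *s a \<in> Mt" unfolding e .
  qed
  have FxMt: "Fr x \<in> Mt"
  proof -
    obtain p c where pc: "p \<in> M'" "c \<in> OL" "Fr x = p + c *s x" using Fx by blast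
    show ?thesis unfolding pc(3) by (rule MtI[OF pc(1,2)])
  qed
  have GxMt: "G x \<in> Mt"
  proof -
    obtain p c where pc: "p \<in> M'" "c \<in> OL" "G x = p + c *s x" using Gx by blast
    show ?thesis unfolding pc(3) by (rule MtI[OF pc(1,2)])
  qed
  have FMtsub: "Fr ` Mt \<subseteq> Mt"
  proof
    fix z assume "z \<in> Fr ` Mt"
    then obtain a where "a \<in> Mt" "z = Fr a" by blast
    then obtain y c where yc: "z = Fr (y + c *s x)" "y \<in> M'" "c \<in> OL" unfolding Mt_def by blast
    then have "z = Fr y + frob c *s Fr x" by (simp add: F_add F_semilin)
    moreover have "Fr y \<in> Mt" using FrM'[OF yc(2)] M'Mt by blast
    moreover have "frob c *s Fr x \<in> Mt" using Omod_scale[OF MtOmod frobO[OF yc(3)] FxMt] .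
    ultimately show "z \<in> Mt" using Omod_add[OF MtOmod] by simp
  qed
  have piFMt: "unif *s z \<in> Fr ` Mt" if "z \<in> Mt" for z
  proof -
    obtain y c where yc: "z = y + c *s x" "y \<in> M'" "c \<in> OL" using \<open>z \<in> Mt\<close> unfolding Mt_def by blast
    have "G z = G y + inv frob c *s G x" unfolding yc(1) sl_add[OF slG] sl_scale[OF slG] ..
    moreover have "G y \<in> Mt" using GM'[OF yc(2)] M'Mt by blast
    moreover have "inv frob c *s G x \<in> Mt" using Omod_scale[OF MtOmod finvO[OF yc(3)] GxMt] .
    ultimately have "G z \<in> Mt" using Omod_add[OF MtOmod] by simp
    moreover have "Fr (G z) = unif *s z" by (rule FG)
    ultimately show ?thesis by (metis image_eqI)
  qed
  have "unif *s x \<in> O_span OL B1" using piM[OF xM] MB1 by simp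
  then obtain a where aO: "\<And>k. a k \<in> OL" and pxa: "unif *s x = (\<Sum>k\<in>UNIV. a k *s B1 k)"
    unfolding O_span_def by blast
  have "\<exists>j. a j / unif \<notin> OL"
  proof (rule ccontr)
    assume "\<not> ?thesis"
    then have "\<And>k. a k / unif \<in> OL" by blast
    moreover have "x = (\<Sum>k\<in>UNIV. (a k / unif) *s B1 k)"
    proof -
      have "x = (1 / unif) *s (unif *s x)" by simp
      also have "\<dots> = (\<Sum>k\<in>UNIV. (a k / unif) *s B1 k)" unfolding pxa by (simp add: vec.scale_sum_right)
      finally show ?thesis .
    qed
    ultimately have "x \<in> M'" unfolding MB1 by (intro span_memI) auto
    then show False using xM' by blast
  qed
  then obtain j where aj: "a j / unif \<notin> OL" by blast
  have uaj: "unit (a j)"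
  proof (rule ccontr)
    assume "\<not> unit (a j)"
    then have "a j \<in> PO" using aO O_nonunit by blast
    then show False using aj PO_iff by blast
  qed
  define C0 where "C0 = B1(j := x)"
  have C0ind: "lin_indep_fam C0" unfolding C0_def
    by (rule xch_indep[OF B1 pinz pxa unit_nz[OF uaj]])
  have spanC0: "O_span OL C0 = Mt"
  proof
    show "O_span OL C0 \<subseteq> Mt"
    proof (rule span_sub[OF MtOmod])
      fix i show "C0 i \<in> Mt"
        using xMt M'Mt span_base[of B1 i] MB1 unfolding C0_def by auto
    qed
  next
    have B1C0: "M' \<subseteq> O_span OL C0" unfolding MB1
    proof (rule span_sub_span)
      fix i show "B1 i \<in> O_span OL C0"
      proof (cases "i = j")
        case True then show ?thesis unfolding C0_def using xch_span[OF pxa piO aO uaj] by simp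
      next
        case False
        then have "B1 i = C0 i" unfolding C0_def by simp
        then show ?thesis using span_base[of C0 i] by simp
      qed
    qed
    have xC0: "x \<in> O_span OL C0" using span_base[of C0 j] unfolding C0_def by simp
    show "Mt \<subseteq> O_span OL C0"
    proof
      fix z assume "z \<in> Mt"
      then obtain y c where "z = y + c *s x" "y \<in> M'" "c \<in> OL" unfolding Mt_def by blast
      then show "z \<in> O_span OL C0"
        using B1C0 xC0 Omod_add[OF Omod_span] Omod_scale[OF Omod_span] by blast
    qed
  qed
  have FMtOmod: "Omod (Fr ` Mt)" by (rule sl_Omod_image[OF good_frob sl MtOmod])
  obtain C' S where C': "lin_indep_fam C'" "O_span OL C' = O_span OL C0"
      and FMtC': "Fr ` Mt = O_span OL (\<lambda>i. (if i \<in> S then unif else 1) *s C' i)"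
    using adapted[OF C0ind FMtOmod] FMtsub piFMt unfolding spanC0 by blast
  have MtC': "Mt = O_span OL C'" using C'(2) spanC0 by simp
  have cardS: "card S = r"
    using count_S[OF sl C'(1) B, of S S0] FMtC' FMB MtC' MB S0 by simp
  have "is_lattice OL Mt" unfolding is_lattice_def using C'(1) MtC' by blast
  moreover have "quot_dim_one OL Mt M'" unfolding quot_dim_one_def using xMt xM' Mt_def by blast
  moreover have "inv_omega OL unif Mt (Fr ` Mt) r"
    unfolding inv_omega_def has_inv_def powi_chi using cardS C'(1) MtC' FMtC' by blast
  ultimately show ?thesis using M'Mt MtM by blast
qed

end

theorem lemma1p3:
  fixes p q :: nat and OL :: "'L::field_char_0 set" and unif :: 'L and frob :: "'L \<Rightarrow> 'L"
    and Fr :: "'L ^ 'n::finite \<Rightarrow> 'L ^ 'n"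
    and M M' :: "('L ^ 'n) set" and r :: nat
  assumes hyp_L: "frob_data p q OL unif frob"
    and F_bij: "bij Fr"
    and F_add: "\<And>x y. Fr (x + y) = Fr x + Fr y"
    and F_semilin: "\<And>c x. Fr (c *s x) = frob c *s Fr x"
    and r_le: "r \<le> CARD('n)"
    and latM: "is_lattice OL M" and latM': "is_lattice OL M'"
    and sub1: "M' \<subset> M" and sub2: "(\<lambda>x. unif *s x) ` M \<subset> M'"
    and invM: "inv_omega OL unif M (Fr ` M) r"
    and invM': "inv_omega OL unif M' (Fr ` M') r"
  shows "\<exists>Mt. is_lattice OL Mt \<and> M' \<subseteq> Mt \<and> Mt \<subseteq> M \<and> quot_dim_one OL Mt M'
              \<and> inv_omega OL unif Mt (Fr ` Mt) r"
proof -
  interpret vr p q OL unif frob by (rule vr.intro[OF hyp_L])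
  show ?thesis by (rule main[OF F_bij F_add F_semilin sub1 sub2 invM invM'])
qed

end
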